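(* Assume $\mathcal M_1=\mathcal M_2=1$ and take $A_1=2\chi_{13}^2+\tfrac12(\chi_{12}-\chi_{13}-\chi_{23})^2$, $A_2=2\chi_{23}^2+\tfrac12(\chi_{12}-\chi_{13}-\chi_{23})^2$. Let $n\ge1$ and let $(\phi_1^k,\phi_2^k)\in\vec{\mathcal C}^{\mathcal G}_{\rm per}$, $k=n-1,n,n+1$, with $\overline{\phi_i^{n-1}}=\overline{\phi_i^{n}}=\overline{\phi_i^{n+1}}$ ($i=1,2$), where $(\phi_1^{n+1},\phi_2^{n+1})$ solves the BDF2 scheme at step $n+1$. Define, for $m\ge0$, $F_h^{m+1}=G_h(\phi_1^{m+1},\phi_2^{m+1})+\frac{3}{4\Delta t}\big(\|\phi_1^{m+1}-\phi_1^m\|_{-1,h}^2+\|\phi_2^{m+1}-\phi_2^m\|_{-1,h}^2\big)+\chi_{13}\|\phi_1^{m+1}-\phi_1^m\|_2^2+\chi_{23}\|\phi_2^{m+1}-\phi_2^m\|_2^2.$ Then $F_h^{n+1}\le F_h^{n}$.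
   Context: Discrete setting. Fix $L>0$, $N\in\mathbb N$, $h=L/N$, $\Omega=(0,L)^2$. $\mathcal C_{\rm per}$ is the space of real grid functions $\nu=(\nu_{i,j})_{i,j\in\mathbb Z}$ with $\nu_{i+aN,j+bN}=\nu_{i,j}$ for all integers $i,j,a,b$ ($\nu_{i,j}$ is the value at the cell centre $((i-\tfrac12)h,(j-\tfrac12)h)$); periodic face-centred functions are indexed by $(i+\frac12,j)$ (east-west faces) or $(i,j+\frac12)$ (north-south faces). Define $(A_x\nu)_{i+\frac12,j}=\tfrac12(\nu_{i+1,j}+\nu_{i,j})$, $(D_x\nu)_{i+\frac12,j}=\tfrac1h(\nu_{i+1,j}-\nu_{i,j})$, and for east-west face functions $f$, $(a_xf)_{i,j}=\tfrac12(f_{i+\frac12,j}+f_{i-\frac12,j})$, $(d_xf)_{i,j}=\tfrac1h(f_{i+\frac12,j}-f_{i-\frac12,j})$; $A_y,D_y,a_y,d_y$ are defined analogously in the second index. $\nabla_h\nu=(D_x\nu,D_y\nu)$, $\nabla_h\cdot(f^x,f^y)=d_xf^x+d_yf^y$, $\Delta_h\nu=d_x(D_x\nu)+d_y(D_y\nu)$ (the 5-point Laplacian). For $\nu,\xi\in\mathcal C_{\rm per}$: $\langle\nu,\xi\rangle=h^2\sum_{i,j=1}^N\nu_{i,j}\xi_{i,j}$, $\|\nu\|_2=\langle\nu,\nu\rangle^{1/2}$, $\|\nu\|_\infty=\max_{1\le i,j\le N}|\nu_{i,j}|$, $\|\nabla_h\nu\|_2^2=\langle a_x((D_x\nu)^2)+a_y((D_y\nu)^2),1\rangle$,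 $\overline{\nu}=|\Omega|^{-1}\langle\nu,1\rangle$. For $\overline\nu=0$, $(-\Delta_h)^{-1}\nu$ denotes the unique mean-zero $\psi\in\mathcal C_{\rm per}$ with $-\Delta_h\psi=\nu$; for mean-zero $\nu,\xi$, $\langle\nu,\xi\rangle_{-1,h}=\langle\nu,(-\Delta_h)^{-1}\xi\rangle$ and $\|\nu\|_{-1,h}=\langle\nu,\nu\rangle_{-1,h}^{1/2}$. Functions of grid functions (products, quotients, $\ln$) act pointwise. Model. $M_0,N_0>0$, $\alpha=\pi((M_0/\pi)^{1/2}+N_0/2)^2$, $\beta=2(M_0/\pi)^{1/2}+N_0$; $\varepsilon_1,\varepsilon_2,\varepsilon_3>0$; $\chi_{12},\chi_{13},\chi_{23}>0$ with $4\chi_{13}\chi_{23}-(\chi_{12}-\chi_{13}-\chi_{23})^2>0$; mobilities $\mathcal M_1,\mathcal M_2>0$. For $a,b>0$, $a+b<1$: $S(a,b)=\frac{a}{M_0}\ln\frac{\alpha a}{M_0}+\frac{b}{N_0}\ln\frac{\beta b}{N_0}+(1-a-b)\ln(1-a-b)$, $H(a,b)=\chi_{12}ab+\chi_{13}a(1-a-b)+\chi_{23}b(1-a-b)$; thus $\partial_aS=\frac1{M_0}\ln\frac{\alpha a}{M_0}+\frac1{M_0}-\ln(1-a-b)-1$, $\partial_bS=\frac1{N_0}\ln\frac{\beta b}{N_0}+\frac1{N_0}-\ln(1-a-b)-1$, $\partial_aH=\chi_{13}-2\chi_{13}a+(\chi_{12}-\chi_{13}-\chi_{23})b$, $\partial_bH=\chi_{23}-2\chi_{23}b+(\chi_{12}-\chi_{13}-\chi_{23})a$.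 $\kappa(s)=1/(36s)$. The Gibbs triangle is $\mathcal G=\{(a,b):a>0,b>0,a+b<1\}$, and $\vec{\mathcal C}^{\mathcal G}_{\rm per}$ is the set of pairs $(\phi_1,\phi_2)\in\mathcal C_{\rm per}^2$ with $((\phi_1)_{i,j},(\phi_2)_{i,j})\in\mathcal G$ for all $i,j$. For such a pair set $u_1=\phi_1$, $u_2=\phi_2$, $u_3=1-\phi_1-\phi_2$ and, for $k=1,2,3$, $T_k(\phi_1,\phi_2)=a_x(\kappa'(A_xu_k)(D_xu_k)^2)-2d_x(\kappa(A_xu_k)D_xu_k)+a_y(\kappa'(A_yu_k)(D_yu_k)^2)-2d_y(\kappa(A_yu_k)D_yu_k)$. Discrete energy: $G_h(\phi_1,\phi_2)=\langle S(\phi_1,\phi_2)+H(\phi_1,\phi_2),1\rangle+\sum_{k=1}^3\varepsilon_k^2\langle a_x(\kappa(A_xu_k)(D_xu_k)^2)+a_y(\kappa(A_yu_k)(D_yu_k)^2),1\rangle$. Convex-part derivatives: $\delta_{\phi_1}G_{h,c}(\phi_1,\phi_2)=\partial_aS(\phi_1,\phi_2)+\varepsilon_1^2T_1-\varepsilon_3^2T_3$, $\delta_{\phi_2}G_{h,c}(\phi_1,\phi_2)=\partial_bS(\phi_1,\phi_2)+\varepsilon_2^2T_2-\varepsilon_3^2T_3$. BDF2 scheme. Fix $\Delta t>0$ and constants $A_1,A_2\ge0$. For $n\ge1$, given $(\phi_1^{k},\phi_2^{k})$, $k=n-1,n$, set $\hat\phi_i^n=2\phi_i^n-\phi_i^{n-1}$.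 A pair $(\phi_1^{n+1},\phi_2^{n+1})\in\vec{\mathcal C}^{\mathcal G}_{\rm per}$ solves the scheme at step $n+1$ if for $i=1,2$: $\frac{3\phi_i^{n+1}-4\phi_i^n+\phi_i^{n-1}}{2\Delta t}=\mathcal M_i\Delta_h\mu_i^{n+1}$, where $\mu_1^{n+1}=\delta_{\phi_1}G_{h,c}(\phi_1^{n+1},\phi_2^{n+1})+\partial_aH(\hat\phi_1^n,\hat\phi_2^n)-A_1\Delta t\,\Delta_h(\phi_1^{n+1}-\phi_1^n)$ and $\mu_2^{n+1}=\delta_{\phi_2}G_{h,c}(\phi_1^{n+1},\phi_2^{n+1})+\partial_bH(\hat\phi_1^n,\hat\phi_2^n)-A_2\Delta t\,\Delta_h(\phi_2^{n+1}-\phi_2^n)$. *)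

theory Defs
  imports Complex_Main
begin

text \<open>A cell-centred function nu is a map int => int => real, nu i j being
  the value at cell (i,j). An east-west face function f is also int => int => real, where
  f i j is the value at face (i+1/2, j); a north-south face function g has g i j the value
  at face (i, j+1/2).\<close>

type_synonym grid = "int \<Rightarrow> int \<Rightarrow> real"

definition hgrid :: "real \<Rightarrow> nat \<Rightarrow> real" where
  "hgrid L N = L / real N"

definition per :: "nat \<Rightarrow> grid \<Rightarrow> bool" where
  "per N \<nu> \<longleftrightarrow> (\<forall>i j a b. \<nu> (i + a * int N) (j + b * int N) = \<nu> i j)"

definition Ax :: "grid \<Rightarrow> grid" where "Ax \<nu> i j = (\<nu> (i+1) j + \<nu> i j) / 2"
definition Ay :: "grid \<Rightarrow> grid" where "Ay \<nu> i j = (\<nu> i (j+1) + \<nu> i j) / 2"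
definition Dx :: "real \<Rightarrow> grid \<Rightarrow> grid" where "Dx h \<nu> i j = (\<nu> (i+1) j - \<nu> i j) / h"
definition Dy :: "real \<Rightarrow> grid \<Rightarrow> grid" where "Dy h \<nu> i j = (\<nu> i (j+1) - \<nu> i j) / h"
definition ax :: "grid \<Rightarrow> grid" where "ax f i j = (f i j + f (i-1) j) / 2"
definition ay :: "grid \<Rightarrow> grid" where "ay f i j = (f i j + f i (j-1)) / 2"
definition dx :: "real \<Rightarrow> grid \<Rightarrow> grid" where "dx h f i j = (f i j - f (i-1) j) / h"
definition dy :: "real \<Rightarrow> grid \<Rightarrow> grid" where "dy h f i j = (f i j - f i (j-1)) / h"

definition lap :: "real \<Rightarrow> grid \<Rightarrow> grid" where
  "lap h \<nu> i j = dx h (Dx h \<nu>) i j + dy h (Dy h \<nu>) i j"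

definition ginner :: "real \<Rightarrow> nat \<Rightarrow> grid \<Rightarrow> grid \<Rightarrow> real" where
  "ginner L N \<nu> \<xi> = (hgrid L N)^2 * (\<Sum>i\<in>{1..int N}. \<Sum>j\<in>{1..int N}. \<nu> i j * \<xi> i j)"

definition gnorm2 :: "real \<Rightarrow> nat \<Rightarrow> grid \<Rightarrow> real" where
  "gnorm2 L N \<nu> = sqrt (ginner L N \<nu> \<nu>)"

definition gmean :: "real \<Rightarrow> nat \<Rightarrow> grid \<Rightarrow> real" where
  "gmean L N \<nu> = ginner L N \<nu> (\<lambda>_ _. 1) / L^2"

definition invlap :: "real \<Rightarrow> nat \<Rightarrow> grid \<Rightarrow> grid" where
  "invlap L N \<nu> = (THE \<psi>. per N \<psi> \<and> gmean L N \<psi> = 0 \<and>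
       (\<forall>i j. - lap (hgrid L N) \<psi> i j = \<nu> i j))"

definition inner_m1 :: "real \<Rightarrow> nat \<Rightarrow> grid \<Rightarrow> grid \<Rightarrow> real" where
  "inner_m1 L N \<nu> \<xi> = ginner L N \<nu> (invlap L N \<xi>)"

definition norm_m1 :: "real \<Rightarrow> nat \<Rightarrow> grid \<Rightarrow> real" where
  "norm_m1 L N \<nu> = sqrt (inner_m1 L N \<nu> \<nu>)"

definition alphaM :: "real \<Rightarrow> real \<Rightarrow> real" where
  "alphaM M0 N0 = pi * (sqrt (M0 / pi) + N0 / 2)^2"
definition betaM :: "real \<Rightarrow> real \<Rightarrow> real" where
  "betaM M0 N0 = 2 * sqrt (M0 / pi) + N0"

definition Sfun :: "real \<Rightarrow> real \<Rightarrow> real \<Rightarrow> real \<Rightarrow> real" where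
  "Sfun M0 N0 a b = a / M0 * ln (alphaM M0 N0 * a / M0) + b / N0 * ln (betaM M0 N0 * b / N0)
     + (1 - a - b) * ln (1 - a - b)"

definition dSa :: "real \<Rightarrow> real \<Rightarrow> real \<Rightarrow> real \<Rightarrow> real" where
  "dSa M0 N0 a b = 1 / M0 * ln (alphaM M0 N0 * a / M0) + 1 / M0 - ln (1 - a - b) - 1"
definition dSb :: "real \<Rightarrow> real \<Rightarrow> real \<Rightarrow> real \<Rightarrow> real" where
  "dSb M0 N0 a b = 1 / N0 * ln (betaM M0 N0 * b / N0) + 1 / N0 - ln (1 - a - b) - 1"

definition Hfun :: "real \<Rightarrow> real \<Rightarrow> real \<Rightarrow> real \<Rightarrow> real \<Rightarrow> real" where
  "Hfun c12 c13 c23 a b = c12 * a * b + c13 * a * (1 - a - b) + c23 * b * (1 - a - b)"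
definition dHa :: "real \<Rightarrow> real \<Rightarrow> real \<Rightarrow> real \<Rightarrow> real \<Rightarrow> real" where
  "dHa c12 c13 c23 a b = c13 - 2 * c13 * a + (c12 - c13 - c23) * b"
definition dHb :: "real \<Rightarrow> real \<Rightarrow> real \<Rightarrow> real \<Rightarrow> real \<Rightarrow> real" where
  "dHb c12 c13 c23 a b = c23 - 2 * c23 * b + (c12 - c13 - c23) * a"

definition kappa :: "real \<Rightarrow> real" where "kappa s = 1 / (36 * s)"
definition kappa' :: "real \<Rightarrow> real" where "kappa' s = - 1 / (36 * s^2)"

definition gibbs :: "nat \<Rightarrow> grid \<Rightarrow> grid \<Rightarrow> bool" where
  "gibbs N p1 p2 \<longleftrightarrow> per N p1 \<and> per N p2 \<and>
     (\<forall>i j. 0 < p1 i j \<and> 0 < p2 i j \<and> p1 i j + p2 i j < 1)"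

definition Tk :: "real \<Rightarrow> grid \<Rightarrow> grid" where
  "Tk h u i j =
     ax (\<lambda>a b. kappa' (Ax u a b) * (Dx h u a b)^2) i j
     - 2 * dx h (\<lambda>a b. kappa (Ax u a b) * Dx h u a b) i j
     + ay (\<lambda>a b. kappa' (Ay u a b) * (Dy h u a b)^2) i j
     - 2 * dy h (\<lambda>a b. kappa (Ay u a b) * Dy h u a b) i j"

definition gradE :: "real \<Rightarrow> nat \<Rightarrow> grid \<Rightarrow> real" where
  "gradE L N u = ginner L N (\<lambda>i j.
      ax (\<lambda>a b. kappa (Ax u a b) * (Dx (hgrid L N) u a b)^2) i j
    + ay (\<lambda>a b. kappa (Ay u a b) * (Dy (hgrid L N) u a b)^2) i j) (\<lambda>_ _. 1)"

definition Gh :: "real \<Rightarrow> nat \<Rightarrow> real \<Rightarrow> real \<Rightarrow> real \<Rightarrow> real \<Rightarrow> real \<Rightarrow> real \<Rightarrow> real \<Rightarrow> real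
     \<Rightarrow> grid \<Rightarrow> grid \<Rightarrow> real" where
  "Gh L N M0 N0 c12 c13 c23 e1 e2 e3 p1 p2 =
     ginner L N (\<lambda>i j. Sfun M0 N0 (p1 i j) (p2 i j) + Hfun c12 c13 c23 (p1 i j) (p2 i j)) (\<lambda>_ _. 1)
     + e1^2 * gradE L N p1 + e2^2 * gradE L N p2
     + e3^2 * gradE L N (\<lambda>i j. 1 - p1 i j - p2 i j)"

definition dGc1 :: "real \<Rightarrow> nat \<Rightarrow> real \<Rightarrow> real \<Rightarrow> real \<Rightarrow> real \<Rightarrow> grid \<Rightarrow> grid \<Rightarrow> grid" where
  "dGc1 L N M0 N0 e1 e3 p1 p2 i j =
     dSa M0 N0 (p1 i j) (p2 i j) + e1^2 * Tk (hgrid L N) p1 i j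
     - e3^2 * Tk (hgrid L N) (\<lambda>a b. 1 - p1 a b - p2 a b) i j"

definition dGc2 :: "real \<Rightarrow> nat \<Rightarrow> real \<Rightarrow> real \<Rightarrow> real \<Rightarrow> real \<Rightarrow> grid \<Rightarrow> grid \<Rightarrow> grid" where
  "dGc2 L N M0 N0 e2 e3 p1 p2 i j =
     dSb M0 N0 (p1 i j) (p2 i j) + e2^2 * Tk (hgrid L N) p2 i j
     - e3^2 * Tk (hgrid L N) (\<lambda>a b. 1 - p1 a b - p2 a b) i j"

text \<open>BDF2 scheme at step n+1: (q1,q2) = phi^{n-1}, (p1,p2) = phi^n, (r1,r2) = phi^{n+1}.\<close>
definition bdf2_step :: "real \<Rightarrow> nat \<Rightarrow> real \<Rightarrow> real \<Rightarrow> real \<Rightarrow> real \<Rightarrow> real \<Rightarrow> real \<Rightarrow> real \<Rightarrow> real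
   \<Rightarrow> real \<Rightarrow> real \<Rightarrow> real \<Rightarrow> real \<Rightarrow> real
   \<Rightarrow> grid \<Rightarrow> grid \<Rightarrow> grid \<Rightarrow> grid \<Rightarrow> grid \<Rightarrow> grid \<Rightarrow> bool" where
  "bdf2_step L N M0 N0 c12 c13 c23 e1 e2 e3 Mob1 Mob2 dt A1 A2 q1 q2 p1 p2 r1 r2 \<longleftrightarrow>
     gibbs N r1 r2 \<and>
     (let h = hgrid L N;
          hat1 = (\<lambda>i j. 2 * p1 i j - q1 i j);
          hat2 = (\<lambda>i j. 2 * p2 i j - q2 i j);
          mu1 = (\<lambda>i j. dGc1 L N M0 N0 e1 e3 r1 r2 i j + dHa c12 c13 c23 (hat1 i j) (hat2 i j)
                   - A1 * dt * lap h (\<lambda>a b. r1 a b - p1 a b) i j);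
          mu2 = (\<lambda>i j. dGc2 L N M0 N0 e2 e3 r1 r2 i j + dHb c12 c13 c23 (hat1 i j) (hat2 i j)
                   - A2 * dt * lap h (\<lambda>a b. r2 a b - p2 a b) i j)
      in (\<forall>i j. (3 * r1 i j - 4 * p1 i j + q1 i j) / (2 * dt) = Mob1 * lap h mu1 i j) \<and>
         (\<forall>i j. (3 * r2 i j - 4 * p2 i j + q2 i j) / (2 * dt) = Mob2 * lap h mu2 i j))"

text \<open>Modified energy F^{m+1} with (a1,a2) = phi^{m+1}, (b1,b2) = phi^m.\<close>
definition Fh :: "real \<Rightarrow> nat \<Rightarrow> real \<Rightarrow> real \<Rightarrow> real \<Rightarrow> real \<Rightarrow> real \<Rightarrow> real \<Rightarrow> real \<Rightarrow> real
     \<Rightarrow> real \<Rightarrow> grid \<Rightarrow> grid \<Rightarrow> grid \<Rightarrow> grid \<Rightarrow> real" where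
  "Fh L N M0 N0 c12 c13 c23 e1 e2 e3 dt a1 a2 b1 b2 =
     Gh L N M0 N0 c12 c13 c23 e1 e2 e3 a1 a2
     + 3 / (4 * dt) * ((norm_m1 L N (\<lambda>i j. a1 i j - b1 i j))^2 + (norm_m1 L N (\<lambda>i j. a2 i j - b2 i j))^2)
     + c13 * (gnorm2 L N (\<lambda>i j. a1 i j - b1 i j))^2 + c23 * (gnorm2 L N (\<lambda>i j. a2 i j - b2 i j))^2"

end

theory Submission
  imports Defs "Jordan_Normal_Form.Determinant"
begin


definition Sg :: "nat \<Rightarrow> grid \<Rightarrow> real" where
  "Sg N f = (\<Sum>i\<in>{1..int N}. \<Sum>j\<in>{1..int N}. f i j)"

definition pp :: "nat \<Rightarrow> grid \<Rightarrow> bool" where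
  "pp N g \<longleftrightarrow> (\<forall>i j. g (i + int N) j = g i j) \<and> (\<forall>i j. g i (j + int N) = g i j)"

lemma sum_shift1:
  fixes g :: "int \<Rightarrow> real"
  assumes "g 0 = g (int N)"
  shows "(\<Sum>i\<in>{1..int N}. g (i - 1)) = (\<Sum>i\<in>{1..int N}. g i)"
proof -
  have "(\<Sum>i\<in>{1..int N}. g (i - 1)) = (\<Sum>i\<in>{0..int N - 1}. g i)"
    by (rule sum.reindex_bij_witness[of _ "\<lambda>i. i + 1" "\<lambda>i. i - 1"]) auto
  also have "\<dots> = (\<Sum>i\<in>{1..int N}. g i)"
  proof (cases "N = 0")
    case True then show ?thesis by simp
  next
    case False
    have "{0..int N - 1} = insert 0 {1..int N - 1}" using False by auto
    moreover have "{1..int N} = insert (int N) {1..int N - 1}" using False by auto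
    ultimately show ?thesis using assms by simp
  qed
  finally show ?thesis .
qed

lemma Sg_shiftx:
  assumes "\<And>j. g 0 j = g (int N) j"
  shows "Sg N (\<lambda>i j. g (i - 1) j) = Sg N g"
proof -
  have "(\<Sum>i\<in>{1..int N}. \<Sum>j\<in>{1..int N}. g (i - 1) j) = (\<Sum>j\<in>{1..int N}. \<Sum>i\<in>{1..int N}. g (i - 1) j)"
    by (rule sum.swap)
  also have "\<dots> = (\<Sum>j\<in>{1..int N}. \<Sum>i\<in>{1..int N}. g i j)"
    using sum_shift1[of "\<lambda>i. g i _" N] assms by simp
  also have "\<dots> = (\<Sum>i\<in>{1..int N}. \<Sum>j\<in>{1..int N}. g i j)"
    by (rule sum.swap)
  finally show ?thesis unfolding Sg_def .
qed

lemma Sg_shifty: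
  assumes "\<And>i. g i 0 = g i (int N)"
  shows "Sg N (\<lambda>i j. g i (j - 1)) = Sg N g"
  unfolding Sg_def using sum_shift1[of "\<lambda>j. g _ j" N] assms by simp

lemma pp_shiftx: "pp N g \<Longrightarrow> Sg N (\<lambda>i j. g (i - 1) j) = Sg N g"
  by (rule Sg_shiftx) (metis pp_def add.left_neutral)
lemma pp_shifty: "pp N g \<Longrightarrow> Sg N (\<lambda>i j. g i (j - 1)) = Sg N g"
  by (rule Sg_shifty) (metis pp_def add.left_neutral)

lemma pp_op2: "pp N u \<Longrightarrow> pp N v \<Longrightarrow> pp N (\<lambda>i j. F (u i j) (v i j))"
  by (simp add: pp_def)
lemma pp_op1: "pp N u \<Longrightarrow> pp N (\<lambda>i j. F (u i j))"
  by (simp add: pp_def)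
lemma pp_const: "pp N (\<lambda>i j. c)"
  by (simp add: pp_def)
lemma pp_sx: "pp N u \<Longrightarrow> pp N (\<lambda>i j. u (i + d) j)"
  unfolding pp_def by (metis add.commute add.left_commute)
lemma pp_sy: "pp N u \<Longrightarrow> pp N (\<lambda>i j. u i (j + d))"
  unfolding pp_def by (metis add.commute add.left_commute)
lemma pp_sxm: "pp N u \<Longrightarrow> pp N (\<lambda>i j. u (i - d) j)"
  using pp_sx[of N u "-d"] by simp
lemma pp_sym: "pp N u \<Longrightarrow> pp N (\<lambda>i j. u i (j - d))"
  using pp_sy[of N u "-d"] by simp

lemma pp_Ax: "pp N u \<Longrightarrow> pp N (Ax u)"
  using pp_sx[of N u 1] unfolding pp_def Ax_def by simp
lemma pp_Ay: "pp N u \<Longrightarrow> pp N (Ay u)"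
  using pp_sy[of N u 1] unfolding pp_def Ay_def by simp
lemma pp_Dx: "pp N u \<Longrightarrow> pp N (Dx h u)"
  using pp_sx[of N u 1] unfolding pp_def Dx_def by simp
lemma pp_Dy: "pp N u \<Longrightarrow> pp N (Dy h u)"
  using pp_sy[of N u 1] unfolding pp_def Dy_def by simp
lemma pp_ax: "pp N u \<Longrightarrow> pp N (ax u)"
  using pp_sxm[of N u 1] unfolding pp_def ax_def by simp
lemma pp_ay: "pp N u \<Longrightarrow> pp N (ay u)"
  using pp_sym[of N u 1] unfolding pp_def ay_def by simp
lemma pp_dx: "pp N u \<Longrightarrow> pp N (dx h u)"
  using pp_sxm[of N u 1] unfolding pp_def dx_def by simp
lemma pp_dy: "pp N u \<Longrightarrow> pp N (dy h u)"
  using pp_sym[of N u 1] unfolding pp_def dy_def by simp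
lemma pp_lap: "pp N u \<Longrightarrow> pp N (lap h u)"
  using pp_dx[OF pp_Dx, of N u h h] pp_dy[OF pp_Dy, of N u h h] unfolding pp_def lap_def by simp

lemma per_pp: "per N u \<Longrightarrow> pp N u"
  unfolding per_def pp_def by (metis mult_1 mult_zero_left add_0_right)

lemma Sg_add: "Sg N (\<lambda>i j. f i j + g i j) = Sg N f + Sg N g"
  by (simp add: Sg_def sum.distrib)
lemma Sg_diff: "Sg N (\<lambda>i j. f i j - g i j) = Sg N f - Sg N g"
  by (simp add: Sg_def sum_subtractf)
lemma Sg_cmult: "Sg N (\<lambda>i j. c * f i j) = c * Sg N f"
  by (simp add: Sg_def sum_distrib_left)
lemma Sg_neg: "Sg N (\<lambda>i j. - f i j) = - Sg N f"
  by (simp add: Sg_def sum_negf)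
lemma Sg_divide: "Sg N (\<lambda>i j. f i j / c) = Sg N f / c"
  by (simp add: Sg_def sum_divide_distrib)
lemma Sg_mono: "(\<And>i j. f i j \<le> g i j) \<Longrightarrow> Sg N f \<le> Sg N g"
  unfolding Sg_def by (intro sum_mono) auto
lemma Sg_nonneg: "(\<And>i j. 0 \<le> f i j) \<Longrightarrow> 0 \<le> Sg N f"
  unfolding Sg_def by (intro sum_nonneg) auto
lemma Sg_cong: "(\<And>i j. f i j = g i j) \<Longrightarrow> Sg N f = Sg N g"
  by (simp add: Sg_def)


lemma sbp_ax:
  assumes f: "pp N f" and v: "pp N v"
  shows "Sg N (\<lambda>i j. ax f i j * v i j) = Sg N (\<lambda>i j. f i j * Ax v i j)"
proof -
  let ?g = "\<lambda>i j. f i j * v (i + 1) j"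
  have g: "pp N ?g" using pp_op2[OF f pp_sx[OF v, of 1], of "(*)"] by simp
  have "Sg N (\<lambda>i j. ax f i j * v i j) = Sg N (\<lambda>i j. (f i j * v i j + ?g (i - 1) j) / 2)"
    by (rule Sg_cong) (simp add: ax_def field_simps)
  also have "\<dots> = (Sg N (\<lambda>i j. f i j * v i j) + Sg N (\<lambda>i j. ?g (i - 1) j)) / 2"
    by (simp add: Sg_divide Sg_add)
  also have "Sg N (\<lambda>i j. ?g (i - 1) j) = Sg N ?g" by (rule pp_shiftx[OF g])
  also have "(Sg N (\<lambda>i j. f i j * v i j) + Sg N ?g) / 2 = Sg N (\<lambda>i j. (f i j * v i j + ?g i j) / 2)"
    by (simp add: Sg_divide Sg_add)
  also have "\<dots> = Sg N (\<lambda>i j. f i j * Ax v i j)"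
    by (rule Sg_cong) (simp add: Ax_def field_simps)
  finally show ?thesis .
qed

lemma sbp_ay:
  assumes f: "pp N f" and v: "pp N v"
  shows "Sg N (\<lambda>i j. ay f i j * v i j) = Sg N (\<lambda>i j. f i j * Ay v i j)"
proof -
  let ?g = "\<lambda>i j. f i j * v i (j + 1)"
  have g: "pp N ?g" using pp_op2[OF f pp_sy[OF v, of 1], of "(*)"] by simp
  have "Sg N (\<lambda>i j. ay f i j * v i j) = Sg N (\<lambda>i j. (f i j * v i j + ?g i (j - 1)) / 2)"
    by (rule Sg_cong) (simp add: ay_def field_simps)
  also have "\<dots> = (Sg N (\<lambda>i j. f i j * v i j) + Sg N (\<lambda>i j. ?g i (j - 1))) / 2"
    by (simp add: Sg_divide Sg_add)
  also have "Sg N (\<lambda>i j. ?g i (j - 1)) = Sg N ?g" by (rule pp_shifty[OF g])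
  also have "(Sg N (\<lambda>i j. f i j * v i j) + Sg N ?g) / 2 = Sg N (\<lambda>i j. (f i j * v i j + ?g i j) / 2)"
    by (simp add: Sg_divide Sg_add)
  also have "\<dots> = Sg N (\<lambda>i j. f i j * Ay v i j)"
    by (rule Sg_cong) (simp add: Ay_def field_simps)
  finally show ?thesis .
qed

lemma sbp_dx:
  assumes f: "pp N f" and v: "pp N v"
  shows "Sg N (\<lambda>i j. dx h f i j * v i j) = - Sg N (\<lambda>i j. f i j * Dx h v i j)"
proof -
  let ?g = "\<lambda>i j. f i j * v (i + 1) j"
  have g: "pp N ?g" using pp_op2[OF f pp_sx[OF v, of 1], of "(*)"] by simp
  have "Sg N (\<lambda>i j. dx h f i j * v i j) = Sg N (\<lambda>i j. (f i j * v i j - ?g (i - 1) j) / h)"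
    by (rule Sg_cong) (simp add: dx_def field_simps)
  also have "\<dots> = (Sg N (\<lambda>i j. f i j * v i j) - Sg N (\<lambda>i j. ?g (i - 1) j)) / h"
    by (simp add: Sg_divide Sg_diff)
  also have "Sg N (\<lambda>i j. ?g (i - 1) j) = Sg N ?g" by (rule pp_shiftx[OF g])
  also have "(Sg N (\<lambda>i j. f i j * v i j) - Sg N ?g) / h = - Sg N (\<lambda>i j. (?g i j - f i j * v i j) / h)"
    by (simp add: Sg_divide Sg_diff, simp add: diff_divide_distrib)
  also have "Sg N (\<lambda>i j. (?g i j - f i j * v i j) / h) = Sg N (\<lambda>i j. f i j * Dx h v i j)"
    by (rule Sg_cong) (simp add: Dx_def field_simps)
  finally show ?thesis .
qed

lemma sbp_dy:
  assumes f: "pp N f" and v: "pp N v"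
  shows "Sg N (\<lambda>i j. dy h f i j * v i j) = - Sg N (\<lambda>i j. f i j * Dy h v i j)"
proof -
  let ?g = "\<lambda>i j. f i j * v i (j + 1)"
  have g: "pp N ?g" using pp_op2[OF f pp_sy[OF v, of 1], of "(*)"] by simp
  have "Sg N (\<lambda>i j. dy h f i j * v i j) = Sg N (\<lambda>i j. (f i j * v i j - ?g i (j - 1)) / h)"
    by (rule Sg_cong) (simp add: dy_def field_simps)
  also have "\<dots> = (Sg N (\<lambda>i j. f i j * v i j) - Sg N (\<lambda>i j. ?g i (j - 1))) / h"
    by (simp add: Sg_divide Sg_diff)
  also have "Sg N (\<lambda>i j. ?g i (j - 1)) = Sg N ?g" by (rule pp_shifty[OF g])
  also have "(Sg N (\<lambda>i j. f i j * v i j) - Sg N ?g) / h = - Sg N (\<lambda>i j. (?g i j - f i j * v i j) / h)"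
    by (simp add: Sg_divide Sg_diff, simp add: diff_divide_distrib)
  also have "Sg N (\<lambda>i j. (?g i j - f i j * v i j) / h) = Sg N (\<lambda>i j. f i j * Dy h v i j)"
    by (rule Sg_cong) (simp add: Dy_def field_simps)
  finally show ?thesis .
qed

definition GI :: "real \<Rightarrow> nat \<Rightarrow> grid \<Rightarrow> grid \<Rightarrow> real" where
  "GI h N u v = Sg N (\<lambda>i j. Dx h u i j * Dx h v i j + Dy h u i j * Dy h v i j)"

lemma sbp_lap:
  assumes u: "pp N u" and v: "pp N v"
  shows "Sg N (\<lambda>i j. lap h u i j * v i j) = - GI h N u v"
proof -
  have "Sg N (\<lambda>i j. lap h u i j * v i j)
      = Sg N (\<lambda>i j. dx h (Dx h u) i j * v i j) + Sg N (\<lambda>i j. dy h (Dy h u) i j * v i j)"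
    by (simp add: lap_def ring_distribs Sg_add)
  also have "\<dots> = - Sg N (\<lambda>i j. Dx h u i j * Dx h v i j) - Sg N (\<lambda>i j. Dy h u i j * Dy h v i j)"
    using sbp_dx[OF pp_Dx[OF u] v, of h h] sbp_dy[OF pp_Dy[OF u] v, of h h] by simp
  finally show ?thesis by (simp add: GI_def Sg_add)
qed

lemma GI_sym: "GI h N u v = GI h N v u"
  unfolding GI_def by (simp add: mult.commute)

lemma GI_self_nonneg: "0 \<le> GI h N u u"
  unfolding GI_def by (rule Sg_nonneg) simp

lemma lap_selfadj:
  assumes "pp N u" "pp N v"
  shows "Sg N (\<lambda>i j. lap h u i j * v i j) = Sg N (\<lambda>i j. u i j * lap h v i j)"
  using sbp_lap[OF assms, of h] sbp_lap[OF assms(2,1), of h]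
  by (simp add: GI_sym mult.commute)


lemma pp_period_x:
  assumes "pp N g" shows "g (i + k * int N) j = g i j"
proof (induct k rule: int_induct[where k=0])
  case base then show ?case by simp
next
  case (step1 k)
  have "g (i + (k + 1) * int N) j = g ((i + k * int N) + int N) j" by (simp add: algebra_simps)
  also have "\<dots> = g (i + k * int N) j" using assms pp_def by blast
  finally show ?case using step1 by simp
next
  case (step2 k)
  have "g (i + (k - 1) * int N) j = g ((i + (k - 1) * int N) + int N) j" using assms pp_def by metis
  also have "\<dots> = g (i + k * int N) j" by (simp add: algebra_simps)
  finally show ?case using step2 by simp
qed

lemma pp_period_y:
  assumes "pp N g" shows "g i (j + k * int N) = g i j"
proof (induct k rule: int_induct[where k=0])
  case base then show ?case by simp
next
  case (step1 k)
  have "g i (j + (k + 1) * int N) = g i ((j + k * int N) + int N)" by (simp add: algebra_simps)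
  also have "\<dots> = g i (j + k * int N)" using assms pp_def by blast
  finally show ?case using step1 by simp
next
  case (step2 k)
  have "g i (j + (k - 1) * int N) = g i ((j + (k - 1) * int N) + int N)" using assms pp_def by metis
  also have "\<dots> = g i (j + k * int N)" by (simp add: algebra_simps)
  finally show ?case using step2 by simp
qed

lemma pp_mod: "pp N g \<Longrightarrow> g i j = g (i mod int N) (j mod int N)"
proof -
  assume p: "pp N g"
  have "g i j = g (i mod int N + (i div int N) * int N) (j mod int N + (j div int N) * int N)"
    by (simp add: mult.commute)
  also have "\<dots> = g (i mod int N) (j mod int N + (j div int N) * int N)"
    using pp_period_x[OF p, of "i mod int N" "i div int N"] by simp
  also have "\<dots> = g (i mod int N) (j mod int N)" using pp_period_y[OF p, of _ "j mod int N" "j div int N"] by simp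
  finally show ?thesis .
qed

lemma pp_mod1: "pp N g \<Longrightarrow> g i j = g ((i - 1) mod int N + 1) ((j - 1) mod int N + 1)"
proof -
  assume p: "pp N g"
  let ?g = "\<lambda>i j. g (i + 1) (j + 1)"
  have "pp N ?g" using pp_sy[OF pp_sx[OF p, of 1], of 1] by simp
  from pp_mod[OF this, of "i - 1" "j - 1"] show ?thesis by simp
qed

lemma Sg_zero_terms:
  assumes "\<And>i j. 0 \<le> f i j" "Sg N f = 0" "i \<in> {1..int N}" "j \<in> {1..int N}"
  shows "f i j = 0"
proof -
  have "\<forall>i\<in>{1..int N}. (\<Sum>j\<in>{1..int N}. f i j) = 0"
    using assms(2) unfolding Sg_def
    by (subst sum_nonneg_eq_0_iff[symmetric]) (auto intro: sum_nonneg assms(1))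
  then have "(\<Sum>j\<in>{1..int N}. f i j) = 0" using assms(3) by blast
  then show ?thesis using assms(1,4) by (subst (asm) sum_nonneg_eq_0_iff) auto
qed

lemma range1: "N \<ge> 1 \<Longrightarrow> (i - 1) mod int N + 1 \<in> {1..int N}"
proof -
  assume "N \<ge> 1" then have n: "0 < int N" by simp
  show ?thesis using pos_mod_bound[OF n, of "i - 1"] pos_mod_sign[OF n, of "i - 1"] by simp
qed

lemma pp_vanish_all:
  assumes "pp N g" "N \<ge> 1" "\<And>i j. i \<in> {1..int N} \<Longrightarrow> j \<in> {1..int N} \<Longrightarrow> g i j = 0"
  shows "g i j = 0"
  using pp_mod1[OF assms(1), of i j] assms(3)[OF range1 range1] assms(2) by simp

lemma const_x: fixes g :: grid shows "(\<And>i j. g (i + 1) j = g i j) \<Longrightarrow> g i j = g 0 j"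
proof (induct i rule: int_induct[where k=0])
  case base then show ?case by simp
next
  case (step1 i) then show ?case by metis
next
  case (step2 i) then show ?case by (metis diff_add_cancel)
qed

lemma const_y: fixes g :: grid shows "(\<And>i j. g i (j + 1) = g i j) \<Longrightarrow> g i j = g i 0"
proof (induct j rule: int_induct[where k=0])
  case base then show ?case by simp
next
  case (step1 j) then show ?case by metis
next
  case (step2 j) then show ?case by (metis diff_add_cancel)
qed

lemma GI_zero_const:
  assumes p: "pp N g" and N: "N \<ge> 1" and h: "h \<noteq> 0" and z: "GI h N g g = 0"
  shows "g i j = g 0 0"
proof -
  have t: "\<And>i j. i \<in> {1..int N} \<Longrightarrow> j \<in> {1..int N} \<Longrightarrow>
      Dx h g i j * Dx h g i j + Dy h g i j * Dy h g i j = 0"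
    by (rule Sg_zero_terms[OF _ z[unfolded GI_def]]) auto
  have dx0: "Dx h g i j = 0" for i j
  proof (rule pp_vanish_all[OF pp_Dx[OF p] N])
    fix i j assume "i \<in> {1..int N}" "j \<in> {1..int N}"
    from t[OF this] show "Dx h g i j = 0"
      by (metis add_nonneg_eq_0_iff mult_eq_0_iff zero_le_square)
  qed
  have dy0: "Dy h g i j = 0" for i j
  proof (rule pp_vanish_all[OF pp_Dy[OF p] N])
    fix i j assume "i \<in> {1..int N}" "j \<in> {1..int N}"
    from t[OF this] show "Dy h g i j = 0"
      by (metis add_nonneg_eq_0_iff mult_eq_0_iff zero_le_square)
  qed
  have gx: "g (i + 1) j = g i j" for i j using dx0[of i j] h by (simp add: Dx_def)
  have gy: "g i (j + 1) = g i j" for i j using dy0[of i j] h by (simp add: Dy_def)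
  have "g i j = g 0 j" by (rule const_x) (rule gx)
  also have "\<dots> = g 0 0" by (rule const_y) (rule gy)
  finally show ?thesis .
qed

lemma Sg_const: "Sg N (\<lambda>i j. c) = real N * real N * c"
  by (simp add: Sg_def)

lemma Sg_lap_zero:
  assumes "pp N u" shows "Sg N (lap h u) = 0"
proof -
  have "Sg N (lap h u) = Sg N (\<lambda>i j. lap h u i j * 1)" by simp
  also have "\<dots> = - GI h N u (\<lambda>i j. 1)" by (rule sbp_lap[OF assms pp_const])
  also have "\<dots> = 0" by (simp add: GI_def Dx_def Dy_def Sg_def)
  finally show ?thesis .
qed

lemma lap_diff: "lap h (\<lambda>i j. u i j - v i j) i j = lap h u i j - lap h v i j"
  by (simp add: lap_def dx_def dy_def Dx_def Dy_def divide_inverse algebra_simps)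

lemma harmonic_zero:
  assumes p: "pp N g" and N: "N \<ge> 1" and h: "h \<noteq> 0"
    and l: "\<And>i j. lap h g i j = 0" and s: "Sg N g = 0"
  shows "g i j = 0"
proof -
  have "GI h N g g = 0" using sbp_lap[OF p p, of h] l by (simp add: Sg_def)
  then have c: "\<And>i j. g i j = g 0 0" using GI_zero_const[OF p N h] by blast
  have "Sg N g = real N * real N * g 0 0" using c Sg_const[of N "g 0 0"] by (metis Sg_cong)
  then have "g 0 0 = 0" using s N by simp
  then show ?thesis using c by simp
qed


definition idx :: "nat \<Rightarrow> int \<Rightarrow> int \<Rightarrow> nat" where
  "idx N i j = nat (i mod int N) * N + nat (j mod int N)"
definition gr :: "nat \<Rightarrow> real vec \<Rightarrow> grid" where
  "gr N v i j = v $ idx N i j"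
definition Lop :: "real \<Rightarrow> nat \<Rightarrow> grid \<Rightarrow> grid" where
  "Lop h N g i j = - lap h g i j + Sg N g"
definition ci :: "nat \<Rightarrow> nat \<Rightarrow> int" where "ci N k = int (k div N)"
definition cj :: "nat \<Rightarrow> nat \<Rightarrow> int" where "cj N k = int (k mod N)"

lemma idx_lt: assumes "N \<ge> 1" shows "idx N i j < N * N"
proof -
  have n: "0 < int N" using assms by simp
  have a: "nat (i mod int N) < N" using pos_mod_bound[OF n, of i] pos_mod_sign[OF n, of i] by linarith
  have b: "nat (j mod int N) < N" using pos_mod_bound[OF n, of j] pos_mod_sign[OF n, of j] by linarith
  have "nat (i mod int N) * N + nat (j mod int N) < nat (i mod int N) * N + N" using b by simp
  also have "\<dots> = (nat (i mod int N) + 1) * N" by simp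
  also have "\<dots> \<le> N * N" using a by (intro mult_right_mono) auto
  finally show ?thesis by (simp add: idx_def)
qed

lemma idx_cell: assumes "k < N * N" shows "idx N (ci N k) (cj N k) = k"
proof -
  have N: "N > 0" using assms by (cases N) auto
  have "k div N < N" using assms by (simp add: div_less_iff_less_mult N)
  then have "int (k div N) mod int N = int (k div N)" by simp
  moreover have "int (k mod N) mod int N = int (k mod N)" using N by simp
  ultimately show ?thesis by (simp add: idx_def ci_def cj_def)
qed

lemma cell_idx: assumes "N \<ge> 1"
  shows "ci N (idx N i j) = i mod int N" "cj N (idx N i j) = j mod int N"
proof -
  have n: "0 < int N" using assms by simp
  have b: "nat (j mod int N) < N" using pos_mod_bound[OF n, of j] pos_mod_sign[OF n, of j] by linarith
  have "idx N i j div N = nat (i mod int N)" using b assms by (simp add: idx_def)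
  then show "ci N (idx N i j) = i mod int N" using pos_mod_sign[OF n, of i] by (simp add: ci_def)
  have "idx N i j mod N = nat (j mod int N)" using b by (simp add: idx_def)
  then show "cj N (idx N i j) = j mod int N" using pos_mod_sign[OF n, of j] by (simp add: cj_def)
qed

lemma per_gr: "per N (gr N v)"
  unfolding per_def gr_def idx_def by simp

lemma pp_Lop: "pp N g \<Longrightarrow> pp N (Lop h N g)"
  using pp_lap[of N g h] unfolding pp_def Lop_def by simp

lemma lap_expand: "lap h g x y = (g (x + 1) y + g (x - 1) y + g x (y + 1) + g x (y - 1) - 4 * g x y) / (h * h)"
  by (simp add: lap_def dx_def dy_def Dx_def Dy_def divide_inverse algebra_simps)

lemma lap_lin: "lap h (\<lambda>i j. \<Sum>l\<in>F. c l * g l i j) x y = (\<Sum>l\<in>F. c l * lap h (g l) x y)"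
proof -
  have "(\<Sum>l\<in>F. c l * lap h (g l) x y) = (\<Sum>l\<in>F. c l * (g l (x + 1) y + g l (x - 1) y + g l x (y + 1) + g l x (y - 1) - 4 * g l x y)) / (h * h)"
    by (simp add: lap_expand sum_divide_distrib)
  also have "\<dots> = lap h (\<lambda>i j. \<Sum>l\<in>F. c l * g l i j) x y"
    unfolding lap_expand
    by (simp add: distrib_left right_diff_distrib sum.distrib sum_subtractf sum_distrib_left mult.left_commute)
  finally show ?thesis by simp
qed

lemma Sg_lin: "Sg N (\<lambda>i j. \<Sum>l\<in>F. c l * g l i j) = (\<Sum>l\<in>F. c l * Sg N (g l))"
proof -
  have "Sg N (\<lambda>i j. \<Sum>l\<in>F. c l * g l i j) = (\<Sum>l\<in>F. Sg N (\<lambda>i j. c l * g l i j))"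
    unfolding Sg_def by (simp add: sum.swap[of _ F])
  then show ?thesis by (simp add: Sg_cmult)
qed

lemma Lop_lin: "Lop h N (\<lambda>i j. \<Sum>l\<in>F. c l * g l i j) x y = (\<Sum>l\<in>F. c l * Lop h N (g l) x y)"
  unfolding Lop_def lap_lin Sg_lin by (simp add: right_diff_distrib sum_subtractf)

lemma gr_sum: assumes "v \<in> carrier_vec (N * N)" "N \<ge> 1"
  shows "gr N v = (\<lambda>i j. \<Sum>l\<in>{..<N*N}. v $ l * gr N (unit_vec (N*N) l) i j)"
proof (intro ext)
  fix i j
  have lt: "idx N i j < N * N" by (rule idx_lt[OF assms(2)])
  have "(\<Sum>l\<in>{..<N*N}. v $ l * gr N (unit_vec (N*N) l) i j)
      = (\<Sum>l\<in>{..<N*N}. (if l = idx N i j then v $ l else 0))"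
    by (rule sum.cong) (auto simp: gr_def lt)
  also have "\<dots> = v $ idx N i j" using lt by simp
  finally show "gr N v i j = (\<Sum>l\<in>{..<N*N}. v $ l * gr N (unit_vec (N*N) l) i j)"
    by (simp add: gr_def)
qed

lemma Lop_zero:
  assumes p: "pp N g" and N: "N \<ge> 1" and h: "h \<noteq> 0" and z: "\<And>i j. Lop h N g i j = 0"
  shows "g i j = 0"
proof -
  have "Sg N (Lop h N g) = Sg N (\<lambda>i j. - lap h g i j) + real N * real N * Sg N g"
    unfolding Lop_def by (simp only: Sg_add Sg_const)
  also have "Sg N (\<lambda>i j. - lap h g i j) = 0" using Sg_lap_zero[OF p, of h] by (simp add: Sg_neg)
  finally have "real N * real N * Sg N g = 0" using z by (simp add: Sg_def)
  then have s: "Sg N g = 0" using N by simp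
  have "lap h g i j = 0" for i j using z[of i j] s by (simp add: Lop_def)
  then show ?thesis using harmonic_zero[OF p N h _ s] by blast
qed

lemma poisson_exists:
  assumes N: "N \<ge> 1" and h: "h \<noteq> 0" and p: "pp N \<nu>" and s: "Sg N \<nu> = 0"
  shows "\<exists>\<psi>. per N \<psi> \<and> Sg N \<psi> = 0 \<and> (\<forall>i j. - lap h \<psi> i j = \<nu> i j)"
proof -
  define n where "n = N * N"
  define A :: "real mat" where "A = mat n n (\<lambda>(k, l). Lop h N (gr N (unit_vec n l)) (ci N k) (cj N k))"
  have Ac: "A \<in> carrier_mat n n" by (simp add: A_def)
  have Av: "(A *\<^sub>v v) $ k = Lop h N (gr N v) (ci N k) (cj N k)" if v: "v \<in> carrier_vec n" and k: "k < n" for v k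
  proof -
    have "(A *\<^sub>v v) $ k = (\<Sum>l\<in>{..<n}. A $$ (k, l) * v $ l)"
      using v k by (simp add: A_def scalar_prod_def lessThan_atLeast0 mult.commute)
    also have "\<dots> = (\<Sum>l\<in>{..<n}. v $ l * Lop h N (gr N (unit_vec n l)) (ci N k) (cj N k))"
      using k by (intro sum.cong) (auto simp: A_def)
    also have "\<dots> = Lop h N (\<lambda>i j. \<Sum>l\<in>{..<n}. v $ l * gr N (unit_vec n l) i j) (ci N k) (cj N k)"
      by (rule Lop_lin[symmetric])
    also have "(\<lambda>i j. \<Sum>l\<in>{..<n}. v $ l * gr N (unit_vec n l) i j) = gr N v"
      using gr_sum[of v N] v N by (simp add: n_def)
    finally show ?thesis .
  qed
  have ppgr: "pp N (gr N v)" for v using per_pp[OF per_gr] .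
  have red: "f i j = f (ci N (idx N i j)) (cj N (idx N i j))" if "pp N f" for f i j
    using pp_mod[OF that, of i j] cell_idx[OF N] by simp
  have idxn: "idx N i j < n" for i j using idx_lt[OF N] by (simp add: n_def)
  have "det A \<noteq> 0"
  proof
    assume "det A = 0"
    then obtain v where v: "v \<in> carrier_vec n" "v \<noteq> 0\<^sub>v n" "A *\<^sub>v v = 0\<^sub>v n"
      using det_0_iff_vec_prod_zero_field[OF Ac] by blast
    have z: "Lop h N (gr N v) i j = 0" for i j
    proof -
      have "Lop h N (gr N v) i j = Lop h N (gr N v) (ci N (idx N i j)) (cj N (idx N i j))"
        by (rule red[OF pp_Lop[OF ppgr]])
      also have "\<dots> = (A *\<^sub>v v) $ idx N i j" using Av[OF v(1) idxn] by simp
      also have "\<dots> = 0" using v(3) idxn by simp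
      finally show ?thesis .
    qed
    have "v = 0\<^sub>v n"
    proof (rule eq_vecI)
      fix k assume "k < dim_vec (0\<^sub>v n :: real vec)"
      then have k: "k < n" by simp
      have "v $ k = gr N v (ci N k) (cj N k)" using idx_cell[of k N] k by (simp add: gr_def n_def)
      also have "\<dots> = 0" by (rule Lop_zero[OF ppgr N h z])
      finally show "v $ k = 0\<^sub>v n $ k" using k by simp
    next
      show "dim_vec v = dim_vec (0\<^sub>v n :: real vec)" using v(1) by simp
    qed
    with v(2) show False by simp
  qed
  then have "A \<in> Units (ring_mat TYPE(real) n ())" by (rule det_non_zero_imp_unit[OF Ac])
  then obtain B where B: "B \<in> carrier_mat n n" "A * B = 1\<^sub>m n"
    unfolding Units_def by (auto simp: ring_mat_def)
  define w where "w = vec n (\<lambda>k. \<nu> (ci N k) (cj N k))"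
  define x where "x = B *\<^sub>v w"
  have wc: "w \<in> carrier_vec n" by (simp add: w_def)
  have xc: "x \<in> carrier_vec n" using B(1) wc by (simp add: x_def)
  have "A *\<^sub>v x = (A * B) *\<^sub>v w" unfolding x_def using Ac B(1) wc by simp
  also have "\<dots> = w" using B(2) wc by simp
  finally have Ax: "A *\<^sub>v x = w" .
  define \<psi> where "\<psi> = gr N x"
  have L: "Lop h N \<psi> i j = \<nu> i j" for i j
  proof -
    have "Lop h N \<psi> i j = Lop h N \<psi> (ci N (idx N i j)) (cj N (idx N i j))"
      unfolding \<psi>_def by (rule red[OF pp_Lop[OF ppgr]])
    also have "\<dots> = (A *\<^sub>v x) $ idx N i j" using Av[OF xc idxn] by (simp add: \<psi>_def)
    also have "\<dots> = \<nu> (ci N (idx N i j)) (cj N (idx N i j))" using Ax idxn by (simp add: w_def)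
    also have "\<dots> = \<nu> i j" using red[OF p] by simp
    finally show ?thesis .
  qed
  have pps: "pp N \<psi>" unfolding \<psi>_def by (rule ppgr)
  have "Sg N (Lop h N \<psi>) = Sg N (\<lambda>i j. - lap h \<psi> i j) + real N * real N * Sg N \<psi>"
    unfolding Lop_def by (simp only: Sg_add Sg_const)
  also have "Sg N (\<lambda>i j. - lap h \<psi> i j) = 0" using Sg_lap_zero[OF pps, of h] by (simp add: Sg_neg)
  finally have "real N * real N * Sg N \<psi> = Sg N \<nu>" using L by (simp add: Sg_def)
  then have s\<psi>: "Sg N \<psi> = 0" using N s by simp
  show ?thesis
  proof (intro exI conjI allI)
    show "per N \<psi>" unfolding \<psi>_def by (rule per_gr)
    show "Sg N \<psi> = 0" by (rule s\<psi>)
    fix i j show "- lap h \<psi> i j = \<nu> i j" using L[of i j] s\<psi> by (simp add: Lop_def)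
  qed
qed


lemma ginner_Sg: "ginner L N u v = (hgrid L N)^2 * Sg N (\<lambda>i j. u i j * v i j)"
  by (simp add: ginner_def Sg_def)

lemma xlog_conv:
  fixes k x y :: real
  assumes k: "k > 0" and x: "x > 0" and y: "y > 0"
  shows "x * ln (k * x) - y * ln (k * y) \<le> (ln (k * x) + 1) * (x - y)"
proof -
  have "ln (x / y) \<le> x / y - 1" using x y by (intro ln_le_minus_one) simp
  then have "y * ln (x / y) \<le> y * (x / y - 1)" using y by (intro mult_left_mono) auto
  also have "\<dots> = x - y" using y by (simp add: field_simps)
  finally have *: "y * (ln x - ln y) \<le> x - y" using x y by (simp add: ln_div)
  have "ln (k * x) = ln k + ln x" "ln (k * y) = ln k + ln y" using k x y by (simp_all add: ln_mult)
  then show ?thesis using * by (simp add: algebra_simps)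
qed

lemma alphaM_pos: "M0 > 0 \<Longrightarrow> N0 > 0 \<Longrightarrow> alphaM M0 N0 > 0"
proof -
  assume a: "M0 > 0" "N0 > 0"
  have "sqrt (M0 / pi) + N0 / 2 > 0" using a by (intro add_nonneg_pos) auto
  then show ?thesis unfolding alphaM_def by (intro mult_pos_pos) auto
qed
lemma betaM_pos: "M0 > 0 \<Longrightarrow> N0 > 0 \<Longrightarrow> betaM M0 N0 > 0"
  unfolding betaM_def by (intro add_nonneg_pos) auto

lemma Sconv:
  assumes M: "M0 > 0" "N0 > 0"
    and a1: "a1 > 0" "b1 > 0" "a1 + b1 < 1" and a0: "a0 > 0" "b0 > 0" "a0 + b0 < 1"
  shows "Sfun M0 N0 a1 b1 - Sfun M0 N0 a0 b0 \<le> dSa M0 N0 a1 b1 * (a1 - a0) + dSb M0 N0 a1 b1 * (b1 - b0)"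
proof -
  let ?ka = "alphaM M0 N0 / M0" and ?kb = "betaM M0 N0 / N0"
  have ka: "?ka > 0" using alphaM_pos[OF M] M by simp
  have kb: "?kb > 0" using betaM_pos[OF M] M by simp
  have t1: "a1 * ln (?ka * a1) - a0 * ln (?ka * a0) \<le> (ln (?ka * a1) + 1) * (a1 - a0)"
    by (rule xlog_conv[OF ka a1(1) a0(1)])
  have t2: "b1 * ln (?kb * b1) - b0 * ln (?kb * b0) \<le> (ln (?kb * b1) + 1) * (b1 - b0)"
    by (rule xlog_conv[OF kb a1(2) a0(2)])
  have t3: "(1 - a1 - b1) * ln (1 * (1 - a1 - b1)) - (1 - a0 - b0) * ln (1 * (1 - a0 - b0))
      \<le> (ln (1 * (1 - a1 - b1)) + 1) * ((1 - a1 - b1) - (1 - a0 - b0))"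
    by (rule xlog_conv) (use a1 a0 in auto)
  have t1': "a1 / M0 * ln (alphaM M0 N0 * a1 / M0) - a0 / M0 * ln (alphaM M0 N0 * a0 / M0)
      \<le> (1 / M0) * ((ln (?ka * a1) + 1) * (a1 - a0))"
  proof -
    have "a1 / M0 * ln (alphaM M0 N0 * a1 / M0) - a0 / M0 * ln (alphaM M0 N0 * a0 / M0)
        = (1 / M0) * (a1 * ln (?ka * a1) - a0 * ln (?ka * a0))" using M by (simp add: field_simps)
    also have "\<dots> \<le> (1 / M0) * ((ln (?ka * a1) + 1) * (a1 - a0))"
      using t1 M by (intro mult_left_mono) auto
    finally show ?thesis .
  qed
  have t2': "b1 / N0 * ln (betaM M0 N0 * b1 / N0) - b0 / N0 * ln (betaM M0 N0 * b0 / N0)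
      \<le> (1 / N0) * ((ln (?kb * b1) + 1) * (b1 - b0))"
  proof -
    have "b1 / N0 * ln (betaM M0 N0 * b1 / N0) - b0 / N0 * ln (betaM M0 N0 * b0 / N0)
        = (1 / N0) * (b1 * ln (?kb * b1) - b0 * ln (?kb * b0))" using M by (simp add: field_simps)
    also have "\<dots> \<le> (1 / N0) * ((ln (?kb * b1) + 1) * (b1 - b0))"
      using t2 M by (intro mult_left_mono) auto
    finally show ?thesis .
  qed
  have e1: "ln (?ka * a1) = ln (alphaM M0 N0 * a1 / M0)" by (simp add: field_simps)
  have e2: "ln (?kb * b1) = ln (betaM M0 N0 * b1 / N0)" by (simp add: field_simps)
  have R: "dSa M0 N0 a1 b1 * (a1 - a0) + dSb M0 N0 a1 b1 * (b1 - b0)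
     = (1 / M0) * ((ln (?ka * a1) + 1) * (a1 - a0)) + (1 / N0) * ((ln (?kb * b1) + 1) * (b1 - b0))
       + (ln (1 * (1 - a1 - b1)) + 1) * ((1 - a1 - b1) - (1 - a0 - b0))"
    unfolding dSa_def dSb_def e1 e2 using M by (simp add: field_simps)
  have Lh: "Sfun M0 N0 a1 b1 - Sfun M0 N0 a0 b0 =
     (a1 / M0 * ln (alphaM M0 N0 * a1 / M0) - a0 / M0 * ln (alphaM M0 N0 * a0 / M0))
     + (b1 / N0 * ln (betaM M0 N0 * b1 / N0) - b0 / N0 * ln (betaM M0 N0 * b0 / N0))
     + ((1 - a1 - b1) * ln (1 * (1 - a1 - b1)) - (1 - a0 - b0) * ln (1 * (1 - a0 - b0)))"
    unfolding Sfun_def by simp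
  show ?thesis unfolding R Lh using t1' t2' t3 by linarith
qed

lemma kap_face:
  assumes s0: "s0 > 0" and s1: "s1 > 0"
  shows "kappa s1 * d1^2 - kappa s0 * d0^2 \<le> kappa' s1 * d1^2 * (s1 - s0) + 2 * (kappa s1 * d1) * (d1 - d0)"
proof -
  have "kappa' s1 * d1^2 * (s1 - s0) + 2 * (kappa s1 * d1) * (d1 - d0) - (kappa s1 * d1^2 - kappa s0 * d0^2)
      = (d0 - d1 * s0 / s1)^2 / (36 * s0)"
    using s0 s1 by (simp add: kappa_def kappa'_def field_simps power2_eq_square)
  moreover have "(d0 - d1 * s0 / s1)^2 / (36 * s0) \<ge> 0" using s0 by simp
  ultimately show ?thesis by linarith
qed


lemma Ax_const: "Ax (\<lambda>i j. c) i j = c" by (simp add: Ax_def)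
lemma Ay_const: "Ay (\<lambda>i j. c) i j = c" by (simp add: Ay_def)

lemma Sg_ax: "pp N f \<Longrightarrow> Sg N (ax f) = Sg N f"
  using sbp_ax[OF _ pp_const, of N f 1] by (simp add: Ax_const)
lemma Sg_ay: "pp N f \<Longrightarrow> Sg N (ay f) = Sg N f"
  using sbp_ay[OF _ pp_const, of N f 1] by (simp add: Ay_const)

lemma gradE_Sg:
  assumes "pp N v"
  shows "gradE L N v = (hgrid L N)^2 * (Sg N (\<lambda>a b. kappa (Ax v a b) * (Dx (hgrid L N) v a b)^2)
                                       + Sg N (\<lambda>a b. kappa (Ay v a b) * (Dy (hgrid L N) v a b)^2))"
proof -
  let ?h = "hgrid L N"
  let ?fx = "\<lambda>a b. kappa (Ax v a b) * (Dx ?h v a b)^2"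
  let ?fy = "\<lambda>a b. kappa (Ay v a b) * (Dy ?h v a b)^2"
  have px: "pp N ?fx" by (rule pp_op2[OF pp_Ax pp_Dx]) (use assms in auto)
  have py: "pp N ?fy" by (rule pp_op2[OF pp_Ay pp_Dy]) (use assms in auto)
  have "gradE L N v = ?h^2 * Sg N (\<lambda>i j. ax ?fx i j + ay ?fy i j)"
    by (simp add: gradE_def ginner_Sg)
  also have "\<dots> = ?h^2 * (Sg N ?fx + Sg N ?fy)"
    using Sg_ax[OF px] Sg_ay[OF py] by (simp add: Sg_add)
  finally show ?thesis .
qed

lemma Sg_Tk:
  assumes pu: "pp N u" and pd: "pp N d"
  shows "Sg N (\<lambda>i j. Tk h u i j * d i j) =
    Sg N (\<lambda>i j. kappa' (Ax u i j) * (Dx h u i j)^2 * Ax d i j + 2 * (kappa (Ax u i j) * Dx h u i j * Dx h d i j)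
                + kappa' (Ay u i j) * (Dy h u i j)^2 * Ay d i j + 2 * (kappa (Ay u i j) * Dy h u i j * Dy h d i j))"
proof -
  let ?gx = "\<lambda>a b. kappa' (Ax u a b) * (Dx h u a b)^2"
  let ?kx = "\<lambda>a b. kappa (Ax u a b) * Dx h u a b"
  let ?gy = "\<lambda>a b. kappa' (Ay u a b) * (Dy h u a b)^2"
  let ?ky = "\<lambda>a b. kappa (Ay u a b) * Dy h u a b"
  have pgx: "pp N ?gx" by (rule pp_op2[OF pp_Ax pp_Dx]) (use pu in auto)
  have pkx: "pp N ?kx" by (rule pp_op2[OF pp_Ax pp_Dx]) (use pu in auto)
  have pgy: "pp N ?gy" by (rule pp_op2[OF pp_Ay pp_Dy]) (use pu in auto)
  have pky: "pp N ?ky" by (rule pp_op2[OF pp_Ay pp_Dy]) (use pu in auto)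
  have "Sg N (\<lambda>i j. Tk h u i j * d i j) =
     Sg N (\<lambda>i j. ax ?gx i j * d i j - 2 * (dx h ?kx i j * d i j) + ay ?gy i j * d i j - 2 * (dy h ?ky i j * d i j))"
    by (rule Sg_cong) (simp add: Tk_def algebra_simps)
  also have "\<dots> = Sg N (\<lambda>i j. ax ?gx i j * d i j) - 2 * Sg N (\<lambda>i j. dx h ?kx i j * d i j)
      + Sg N (\<lambda>i j. ay ?gy i j * d i j) - 2 * Sg N (\<lambda>i j. dy h ?ky i j * d i j)"
    by (simp only: Sg_add Sg_diff Sg_cmult)
  also have "\<dots> = Sg N (\<lambda>i j. ?gx i j * Ax d i j) + 2 * Sg N (\<lambda>i j. ?kx i j * Dx h d i j)
      + Sg N (\<lambda>i j. ?gy i j * Ay d i j) + 2 * Sg N (\<lambda>i j. ?ky i j * Dy h d i j)"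
    using sbp_ax[OF pgx pd] sbp_dx[OF pkx pd, of h] sbp_ay[OF pgy pd] sbp_dy[OF pky pd, of h] by simp
  also have "\<dots> = Sg N (\<lambda>i j. ?gx i j * Ax d i j + 2 * (?kx i j * Dx h d i j)
      + ?gy i j * Ay d i j + 2 * (?ky i j * Dy h d i j))"
    by (simp only: Sg_add Sg_cmult)
  finally show ?thesis .
qed

lemma gradE_conv:
  assumes pu: "pp N u" and pw: "pp N w" and upos: "\<And>i j. u i j > 0" and wpos: "\<And>i j. w i j > 0"
  shows "gradE L N u - gradE L N w \<le> ginner L N (Tk (hgrid L N) u) (\<lambda>i j. u i j - w i j)"
proof -
  let ?h = "hgrid L N"
  let ?d = "\<lambda>i j. u i j - w i j"
  have pd: "pp N ?d" using pp_op2[OF pu pw, of "(-)"] by simp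
  have Axd: "Ax ?d i j = Ax u i j - Ax w i j" for i j by (simp add: Ax_def field_simps)
  have Ayd: "Ay ?d i j = Ay u i j - Ay w i j" for i j by (simp add: Ay_def field_simps)
  have Dxd: "Dx ?h ?d i j = Dx ?h u i j - Dx ?h w i j" for i j by (simp add: Dx_def diff_divide_distrib)
  have Dyd: "Dy ?h ?d i j = Dy ?h u i j - Dy ?h w i j" for i j by (simp add: Dy_def diff_divide_distrib)
  have wx: "Ax w i j > 0" for i j using wpos[of "i+1" j] wpos[of i j] by (simp add: Ax_def)
  have ux: "Ax u i j > 0" for i j using upos[of "i+1" j] upos[of i j] by (simp add: Ax_def)
  have wy: "Ay w i j > 0" for i j using wpos[of i "j+1"] wpos[of i j] by (simp add: Ay_def)
  have uy: "Ay u i j > 0" for i j using upos[of i "j+1"] upos[of i j] by (simp add: Ay_def)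
  have pt: "(kappa (Ax u i j) * (Dx ?h u i j)^2 + kappa (Ay u i j) * (Dy ?h u i j)^2)
          - (kappa (Ax w i j) * (Dx ?h w i j)^2 + kappa (Ay w i j) * (Dy ?h w i j)^2)
       \<le> kappa' (Ax u i j) * (Dx ?h u i j)^2 * Ax ?d i j + 2 * (kappa (Ax u i j) * Dx ?h u i j * Dx ?h ?d i j)
                + kappa' (Ay u i j) * (Dy ?h u i j)^2 * Ay ?d i j + 2 * (kappa (Ay u i j) * Dy ?h u i j * Dy ?h ?d i j)" for i j
    using kap_face[of "Ax w i j" "Ax u i j" "Dx ?h u i j" "Dx ?h w i j", OF wx ux]
          kap_face[of "Ay w i j" "Ay u i j" "Dy ?h u i j" "Dy ?h w i j", OF wy uy]
    unfolding Axd Ayd Dxd Dyd by (simp add: algebra_simps)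
  have "gradE L N u - gradE L N w = ?h^2 * Sg N (\<lambda>i j. (kappa (Ax u i j) * (Dx ?h u i j)^2 + kappa (Ay u i j) * (Dy ?h u i j)^2)
          - (kappa (Ax w i j) * (Dx ?h w i j)^2 + kappa (Ay w i j) * (Dy ?h w i j)^2))"
    unfolding gradE_Sg[OF pu] gradE_Sg[OF pw] by (simp add: Sg_add Sg_diff algebra_simps)
  also have "\<dots> \<le> ?h^2 * Sg N (\<lambda>i j. kappa' (Ax u i j) * (Dx ?h u i j)^2 * Ax ?d i j + 2 * (kappa (Ax u i j) * Dx ?h u i j * Dx ?h ?d i j)
                + kappa' (Ay u i j) * (Dy ?h u i j)^2 * Ay ?d i j + 2 * (kappa (Ay u i j) * Dy ?h u i j * Dy ?h ?d i j))"
    by (intro mult_left_mono Sg_mono pt) simp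
  also have "\<dots> = ginner L N (Tk ?h u) ?d"
    unfolding ginner_Sg Sg_Tk[OF pu pd] ..
  finally show ?thesis .
qed


definition Wf :: "real \<Rightarrow> real \<Rightarrow> real \<Rightarrow> real \<Rightarrow> real \<Rightarrow> real \<Rightarrow> real \<Rightarrow> real" where
  "Wf c12 c13 c23 a1 a2 b1 b2 = 2*c13*b1*a1 - (c12 - c13 - c23)*b2*a1 + 2*c23*b2*a2 - (c12 - c13 - c23)*b1*a2
     - c13*b1^2 - c23*b2^2 + (c12 - c13 - c23)*a1*a2"

lemma H_ident:
  "Hfun c12 c13 c23 r1 r2 - Hfun c12 c13 c23 p1 p2 =
     dHa c12 c13 c23 (2*p1 - q1) (2*p2 - q2) * (r1 - p1) + dHb c12 c13 c23 (2*p1 - q1) (2*p2 - q2) * (r2 - p2)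
     + Wf c12 c13 c23 (r1 - p1) (r2 - p2) (p1 - q1) (p2 - q2)
     + c13 * (p1 - q1)^2 + c23 * (p2 - q2)^2 - c13 * (r1 - p1)^2 - c23 * (r2 - p2)^2"
  by (simp add: Hfun_def dHa_def dHb_def Wf_def power2_eq_square algebra_simps)

lemma quad_max: fixes k b f :: real shows "k > 0 \<Longrightarrow> - k * b^2 + b * f \<le> f^2 / (4 * k)"
proof -
  assume k: "k > 0"
  have "f^2 / (4 * k) - (- k * b^2 + b * f) = (2 * k * b - f)^2 / (4 * k)"
    using k by (simp add: field_simps power2_eq_square)
  moreover have "(2 * k * b - f)^2 / (4 * k) \<ge> 0" using k by simp
  ultimately show ?thesis by linarith
qed

lemma W_bound:
  fixes c12 c13 c23 :: real
  assumes c13: "c13 > 0" and c23: "c23 > 0" and d: "4 * c13 * c23 - (c12 - c13 - c23)^2 > 0"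
  shows "Wf c12 c13 c23 a1 a2 b1 b2 \<le> (2 * c13 + \<bar>c12 - c13 - c23\<bar> / 2) * a1^2 + (2 * c23 + \<bar>c12 - c13 - c23\<bar> / 2) * a2^2"
proof -
  define c where "c = c12 - c13 - c23"
  have W: "Wf c12 c13 c23 a1 a2 b1 b2 = (- c13 * b1^2 + b1 * (2*c13*a1 - c*a2)) + (- c23 * b2^2 + b2 * (2*c23*a2 - c*a1)) + c*a1*a2"
    by (simp add: Wf_def c_def power2_eq_square algebra_simps)
  have q1: "- c13 * b1^2 + b1 * (2*c13*a1 - c*a2) \<le> (2*c13*a1 - c*a2)^2 / (4 * c13)" by (rule quad_max[OF c13])
  have q2: "- c23 * b2^2 + b2 * (2*c23*a2 - c*a1) \<le> (2*c23*a2 - c*a1)^2 / (4 * c23)" by (rule quad_max[OF c23])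
  have e1: "(2*c13*a1 - c*a2)^2 / (4 * c13) = c13 * a1^2 - c*a1*a2 + c^2 * a2^2 / (4 * c13)"
    using c13 by (simp add: field_simps power2_eq_square)
  have e2: "(2*c23*a2 - c*a1)^2 / (4 * c23) = c23 * a2^2 - c*a1*a2 + c^2 * a1^2 / (4 * c23)"
    using c23 by (simp add: field_simps power2_eq_square)
  have cc: "c^2 < 4 * c13 * c23" using d by (simp add: c_def)
  have f1: "c^2 * a1^2 / (4 * c23) \<le> c13 * a1^2"
  proof -
    have "c^2 / (4 * c23) \<le> c13" using cc c23 by (simp add: field_simps)
    then have "c^2 / (4 * c23) * a1^2 \<le> c13 * a1^2" by (intro mult_right_mono) auto
    then show ?thesis by simp
  qed
  have f2: "c^2 * a2^2 / (4 * c13) \<le> c23 * a2^2"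
  proof -
    have "c^2 / (4 * c13) \<le> c23" using cc c13 by (simp add: field_simps)
    then have "c^2 / (4 * c13) * a2^2 \<le> c23 * a2^2" by (intro mult_right_mono) auto
    then show ?thesis by simp
  qed
  have f3: "- c * a1 * a2 \<le> \<bar>c\<bar> / 2 * a1^2 + \<bar>c\<bar> / 2 * a2^2"
  proof -
    have "- c * a1 * a2 \<le> \<bar>c\<bar> * \<bar>a1 * a2\<bar>" by (simp add: abs_mult[symmetric])
    moreover have "2 * \<bar>a1 * a2\<bar> \<le> a1^2 + a2^2"
    proof -
      have "0 \<le> (\<bar>a1\<bar> - \<bar>a2\<bar>)^2" by simp
      then show ?thesis by (simp add: power2_eq_square algebra_simps abs_mult)
    qed
    then have "\<bar>c\<bar> * (2 * \<bar>a1 * a2\<bar>) \<le> \<bar>c\<bar> * (a1^2 + a2^2)" by (intro mult_left_mono) auto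
    ultimately show ?thesis by (simp add: algebra_simps)
  qed
  show ?thesis using W q1 q2 e1 e2 f1 f2 f3 unfolding c_def[symmetric] by (simp add: algebra_simps)
qed

lemma A_bound:
  fixes c13 c :: real
  shows "3 / 8 * (2 * c13 + \<bar>c\<bar> / 2)^2 \<le> 2 * c13^2 + c^2 / 2"
proof -
  have "2 * c13^2 + c^2 / 2 - 3 / 8 * (2 * c13 + \<bar>c\<bar> / 2)^2 = (c13 - 3/4 * \<bar>c\<bar>)^2 / 2 + \<bar>c\<bar>^2 / 8"
    by (cases "c \<ge> 0") (simp_all add: power2_eq_square field_simps)
  moreover have "(c13 - 3/4 * \<bar>c\<bar>)^2 / 2 + \<bar>c\<bar>^2 / 8 \<ge> 0" by simp
  ultimately show ?thesis by linarith
qed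

lemma GI_am1: "2 * k * GI h N u v \<le> GI h N u u + k^2 * GI h N v v"
proof -
  have "Sg N (\<lambda>i j. 2 * k * (Dx h u i j * Dx h v i j + Dy h u i j * Dy h v i j))
     \<le> Sg N (\<lambda>i j. (Dx h u i j * Dx h u i j + Dy h u i j * Dy h u i j) + k^2 * (Dx h v i j * Dx h v i j + Dy h v i j * Dy h v i j))"
  proof (rule Sg_mono)
    fix i j
    have "0 \<le> (Dx h u i j - k * Dx h v i j)^2 + (Dy h u i j - k * Dy h v i j)^2" by simp
    then show "2 * k * (Dx h u i j * Dx h v i j + Dy h u i j * Dy h v i j)
     \<le> (Dx h u i j * Dx h u i j + Dy h u i j * Dy h u i j) + k^2 * (Dx h v i j * Dx h v i j + Dy h v i j * Dy h v i j)"
      by (simp add: power2_eq_square algebra_simps)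
  qed
  then show ?thesis unfolding GI_def by (simp add: Sg_add Sg_cmult mult.assoc)
qed

lemma GI_am2: "GI h N u v \<le> 3 / 2 * GI h N u u + 1 / 6 * GI h N v v"
proof -
  have "Sg N (\<lambda>i j. (Dx h u i j * Dx h v i j + Dy h u i j * Dy h v i j))
     \<le> Sg N (\<lambda>i j. 3 / 2 * (Dx h u i j * Dx h u i j + Dy h u i j * Dy h u i j) + 1 / 6 * (Dx h v i j * Dx h v i j + Dy h v i j * Dy h v i j))"
  proof (rule Sg_mono)
    fix i j
    have "0 \<le> (3 * Dx h u i j - Dx h v i j)^2 + (3 * Dy h u i j - Dy h v i j)^2" by simp
    then show "(Dx h u i j * Dx h v i j + Dy h u i j * Dy h v i j)
     \<le> 3 / 2 * (Dx h u i j * Dx h u i j + Dy h u i j * Dy h u i j) + 1 / 6 * (Dx h v i j * Dx h v i j + Dy h v i j * Dy h v i j)"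
      by (simp add: power2_eq_square algebra_simps)
  qed
  then show ?thesis unfolding GI_def by (simp only: Sg_add Sg_cmult)
qed

lemma P2:
  fixes dt X Y Z A \<beta> :: real
  assumes dt: "dt > 0" and Y: "0 \<le> Y" and b: "0 \<le> \<beta>"
    and h: "2 * (3 * \<beta> / 4 * dt) * Z \<le> X + (3 * \<beta> / 4 * dt)^2 * Y"
    and A: "3 / 8 * \<beta>^2 \<le> A"
  shows "\<beta> * Z \<le> 2 / 3 * (X / dt) + A * dt * Y"
proof -
  have "\<beta> * Z = (2 / (3 * dt)) * (2 * (3 * \<beta> / 4 * dt) * Z)" using dt by (simp add: field_simps)
  also have "\<dots> \<le> (2 / (3 * dt)) * (X + (3 * \<beta> / 4 * dt)^2 * Y)" using h dt by (intro mult_left_mono) auto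
  also have "\<dots> = 2 / 3 * (X / dt) + (3 / 8 * \<beta>^2) * dt * Y" using dt by (simp add: field_simps power2_eq_square)
  also have "\<dots> \<le> 2 / 3 * (X / dt) + A * dt * Y"
    by (intro add_left_mono mult_right_mono) (use A dt Y in auto)
  finally show ?thesis .
qed


lemma hpos: "L > 0 \<Longrightarrow> N \<ge> 1 \<Longrightarrow> hgrid L N > 0"
  by (simp add: hgrid_def)


lemma gmean_Sg: "gmean L N u = (hgrid L N)^2 * Sg N u / L^2"
  by (simp add: gmean_def ginner_Sg)

lemma invlap_spec:
  assumes L: "L > 0" and N: "N \<ge> 1" and p: "pp N \<nu>" and s: "Sg N \<nu> = 0"
  shows "per N (invlap L N \<nu>) \<and> gmean L N (invlap L N \<nu>) = 0 \<and>
         (\<forall>i j. - lap (hgrid L N) (invlap L N \<nu>) i j = \<nu> i j)"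
proof -
  let ?h = "hgrid L N"
  have h: "?h > 0" by (rule hpos[OF L N])
  let ?P = "\<lambda>\<psi>. per N \<psi> \<and> gmean L N \<psi> = 0 \<and> (\<forall>i j. - lap ?h \<psi> i j = \<nu> i j)"
  have "\<exists>!\<psi>. ?P \<psi>"
  proof (rule ex_ex1I)
    obtain \<psi> where \<psi>: "per N \<psi>" "Sg N \<psi> = 0" "\<forall>i j. - lap ?h \<psi> i j = \<nu> i j"
      using poisson_exists[OF N _ p s, of ?h] h by auto
    show "\<exists>\<psi>. ?P \<psi>" using \<psi> by (auto simp: gmean_Sg)
  next
    fix \<psi> \<psi>0 assume a: "?P \<psi>" and b: "?P \<psi>0"
    have s1: "Sg N \<psi> = 0" using a h L by (simp add: gmean_Sg)
    have s2: "Sg N \<psi>0 = 0" using b h L by (simp add: gmean_Sg)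
    let ?d = "\<lambda>i j. \<psi> i j - \<psi>0 i j"
    have pd: "pp N ?d" using pp_op2[OF per_pp per_pp, of N \<psi> \<psi>0 "(-)"] a b by simp
    have "?d i j = 0" for i j
    proof (rule harmonic_zero[OF pd N])
      show "?h \<noteq> 0" using h by simp
      fix i j
      have "- lap ?h \<psi> i j = - lap ?h \<psi>0 i j" using a b by simp
      then show "lap ?h ?d i j = 0" by (simp add: lap_diff)
    next
      show "Sg N ?d = 0" using s1 s2 by (simp add: Sg_diff)
    qed
    then show "\<psi> = \<psi>0" by (intro ext) simp
  qed
  from theI'[OF this] show ?thesis unfolding invlap_def .
qed

lemma pp_Tk: assumes "pp N u" shows "pp N (Tk h u)"
proof -
  have a: "pp N (ax (\<lambda>a b. kappa' (Ax u a b) * (Dx h u a b)^2))"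
    by (rule pp_ax, rule pp_op2[OF pp_Ax pp_Dx]) (use assms in auto)
  have b: "pp N (dx h (\<lambda>a b. kappa (Ax u a b) * Dx h u a b))"
    by (rule pp_dx, rule pp_op2[OF pp_Ax pp_Dx]) (use assms in auto)
  have c: "pp N (ay (\<lambda>a b. kappa' (Ay u a b) * (Dy h u a b)^2))"
    by (rule pp_ay, rule pp_op2[OF pp_Ay pp_Dy]) (use assms in auto)
  have d: "pp N (dy h (\<lambda>a b. kappa (Ay u a b) * Dy h u a b))"
    by (rule pp_dy, rule pp_op2[OF pp_Ay pp_Dy]) (use assms in auto)
  show ?thesis using a b c d unfolding pp_def Tk_def by simp
qed

lemma pp_dGc1: assumes "pp N r1" "pp N r2" shows "pp N (dGc1 L N M0 N0 e1 e3 r1 r2)"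
proof -
  have u3: "pp N (\<lambda>a b. 1 - r1 a b - r2 a b)" using assms unfolding pp_def by simp
  show ?thesis using pp_Tk[OF assms(1)] pp_Tk[OF u3] assms unfolding pp_def dGc1_def by simp
qed

lemma pp_dGc2: assumes "pp N r1" "pp N r2" shows "pp N (dGc2 L N M0 N0 e2 e3 r1 r2)"
proof -
  have u3: "pp N (\<lambda>a b. 1 - r1 a b - r2 a b)" using assms unfolding pp_def by simp
  show ?thesis using pp_Tk[OF assms(2)] pp_Tk[OF u3] assms unfolding pp_def dGc2_def by simp
qed


theorem mainTheorem3:
  fixes L dt M0 N0 c12 c13 c23 e1 e2 e3 :: real and N :: nat
    and q1 q2 p1 p2 r1 r2 :: grid
  assumes "L > 0" and "N \<ge> 1" and "dt > 0"
    and "M0 > 0" and "N0 > 0"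
    and "e1 > 0" and "e2 > 0" and "e3 > 0"
    and "c12 > 0" and "c13 > 0" and "c23 > 0"
    and "4 * c13 * c23 - (c12 - c13 - c23)^2 > 0"
    and "gibbs N q1 q2" and "gibbs N p1 p2" and "gibbs N r1 r2"
    and "gmean L N q1 = gmean L N p1" and "gmean L N p1 = gmean L N r1"
    and "gmean L N q2 = gmean L N p2" and "gmean L N p2 = gmean L N r2"
    and "bdf2_step L N M0 N0 c12 c13 c23 e1 e2 e3 1 1 dt
           (2 * c13^2 + (c12 - c13 - c23)^2 / 2) (2 * c23^2 + (c12 - c13 - c23)^2 / 2)
           q1 q2 p1 p2 r1 r2"
  shows "Fh L N M0 N0 c12 c13 c23 e1 e2 e3 dt r1 r2 p1 p2
         \<le> Fh L N M0 N0 c12 c13 c23 e1 e2 e3 dt p1 p2 q1 q2"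
proof -
  note Lp = assms(1) and Np = assms(2) and dtp = assms(3)
  define h where "h = hgrid L N"
  have hp: "h > 0" unfolding h_def by (rule hpos[OF Lp Np])
  have gq: "per N q1" "per N q2" "\<And>i j. 0 < q1 i j" "\<And>i j. 0 < q2 i j" "\<And>i j. q1 i j + q2 i j < 1"
    using assms(13) unfolding gibbs_def by auto
  have gp: "per N p1" "per N p2" "\<And>i j. 0 < p1 i j" "\<And>i j. 0 < p2 i j" "\<And>i j. p1 i j + p2 i j < 1"
    using assms(14) unfolding gibbs_def by auto
  have gr: "per N r1" "per N r2" "\<And>i j. 0 < r1 i j" "\<And>i j. 0 < r2 i j" "\<And>i j. r1 i j + r2 i j < 1"
    using assms(15) unfolding gibbs_def by auto
  have ppq1: "pp N q1" and ppq2: "pp N q2" using gq per_pp by auto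
  have ppp1: "pp N p1" and ppp2: "pp N p2" using gp per_pp by auto
  have ppr1: "pp N r1" and ppr2: "pp N r2" using gr per_pp by auto
  let ?a1 = "\<lambda>i j. r1 i j - p1 i j"
  let ?a2 = "\<lambda>i j. r2 i j - p2 i j"
  let ?b1 = "\<lambda>i j. p1 i j - q1 i j"
  let ?b2 = "\<lambda>i j. p2 i j - q2 i j"
  have ppa1: "pp N ?a1" using pp_op2[OF ppr1 ppp1, of "(-)"] by simp
  have ppa2: "pp N ?a2" using pp_op2[OF ppr2 ppp2, of "(-)"] by simp
  have ppb1: "pp N ?b1" using pp_op2[OF ppp1 ppq1, of "(-)"] by simp
  have ppb2: "pp N ?b2" using pp_op2[OF ppp2 ppq2, of "(-)"] by simp
  have meanSg: "Sg N u = Sg N w" if "gmean L N u = gmean L N w" for u w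
    using that hp Lp by (simp add: gmean_Sg h_def[symmetric])
  have sa1: "Sg N ?a1 = 0" using meanSg[OF assms(17)] by (simp add: Sg_diff)
  have sa2: "Sg N ?a2 = 0" using meanSg[OF assms(19)] by (simp add: Sg_diff)
  have sb1: "Sg N ?b1 = 0" using meanSg[OF assms(16)] by (simp add: Sg_diff)
  have sb2: "Sg N ?b2 = 0" using meanSg[OF assms(18)] by (simp add: Sg_diff)
  define \<psi>1 where "\<psi>1 = invlap L N ?a1"
  define \<psi>2 where "\<psi>2 = invlap L N ?a2"
  define \<phi>1 where "\<phi>1 = invlap L N ?b1"
  define \<phi>2 where "\<phi>2 = invlap L N ?b2"
  have s\<psi>1: "pp N \<psi>1" "\<And>i j. - lap h \<psi>1 i j = ?a1 i j"
    using invlap_spec[OF Lp Np ppa1 sa1] per_pp unfolding \<psi>1_def h_def by auto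
  have s\<psi>2: "pp N \<psi>2" "\<And>i j. - lap h \<psi>2 i j = ?a2 i j"
    using invlap_spec[OF Lp Np ppa2 sa2] per_pp unfolding \<psi>2_def h_def by auto
  have s\<phi>1: "pp N \<phi>1" "\<And>i j. - lap h \<phi>1 i j = ?b1 i j"
    using invlap_spec[OF Lp Np ppb1 sb1] per_pp unfolding \<phi>1_def h_def by auto
  have s\<phi>2: "pp N \<phi>2" "\<And>i j. - lap h \<phi>2 i j = ?b2 i j"
    using invlap_spec[OF Lp Np ppb2 sb2] per_pp unfolding \<phi>2_def h_def by auto
  have SgGI: "Sg N (\<lambda>i j. \<nu> i j * w i j) = GI h N \<psi> w"
    if "pp N \<psi>" "\<And>i j. - lap h \<psi> i j = \<nu> i j" "pp N w" for \<nu> \<psi> w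
  proof -
    have "Sg N (\<lambda>i j. \<nu> i j * w i j) = - Sg N (\<lambda>i j. lap h \<psi> i j * w i j)"
      using that(2) by (simp add: Sg_neg[symmetric] flip: that(2))
    also have "\<dots> = GI h N \<psi> w" using sbp_lap[OF that(1) that(3)] by simp
    finally show ?thesis .
  qed
  define X1 where "X1 = GI h N \<psi>1 \<psi>1"
  define X2 where "X2 = GI h N \<psi>2 \<psi>2"
  define Xb1 where "Xb1 = GI h N \<phi>1 \<phi>1"
  define Xb2 where "Xb2 = GI h N \<phi>2 \<phi>2"
  define C1 where "C1 = GI h N \<phi>1 \<psi>1"
  define C2 where "C2 = GI h N \<phi>2 \<psi>2"
  define Z1 where "Z1 = Sg N (\<lambda>i j. ?a1 i j * ?a1 i j)"
  define Z2 where "Z2 = Sg N (\<lambda>i j. ?a2 i j * ?a2 i j)"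
  define Zb1 where "Zb1 = Sg N (\<lambda>i j. ?b1 i j * ?b1 i j)"
  define Zb2 where "Zb2 = Sg N (\<lambda>i j. ?b2 i j * ?b2 i j)"
  define Y1 where "Y1 = GI h N ?a1 ?a1"
  define Y2 where "Y2 = GI h N ?a2 ?a2"
  have X1a: "Sg N (\<lambda>i j. ?a1 i j * \<psi>1 i j) = X1" unfolding X1_def by (rule SgGI[OF s\<psi>1 s\<psi>1(1)])
  have X2a: "Sg N (\<lambda>i j. ?a2 i j * \<psi>2 i j) = X2" unfolding X2_def by (rule SgGI[OF s\<psi>2 s\<psi>2(1)])
  have Xb1a: "Sg N (\<lambda>i j. ?b1 i j * \<phi>1 i j) = Xb1" unfolding Xb1_def by (rule SgGI[OF s\<phi>1 s\<phi>1(1)])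
  have Xb2a: "Sg N (\<lambda>i j. ?b2 i j * \<phi>2 i j) = Xb2" unfolding Xb2_def by (rule SgGI[OF s\<phi>2 s\<phi>2(1)])
  have C1a: "Sg N (\<lambda>i j. ?b1 i j * \<psi>1 i j) = C1" unfolding C1_def by (rule SgGI[OF s\<phi>1 s\<psi>1(1)])
  have C2a: "Sg N (\<lambda>i j. ?b2 i j * \<psi>2 i j) = C2" unfolding C2_def by (rule SgGI[OF s\<phi>2 s\<psi>2(1)])
  have Z1a: "Z1 = GI h N \<psi>1 ?a1" unfolding Z1_def by (rule SgGI[OF s\<psi>1 ppa1])
  have Z2a: "Z2 = GI h N \<psi>2 ?a2" unfolding Z2_def by (rule SgGI[OF s\<psi>2 ppa2])
  have nX: "0 \<le> X1" "0 \<le> X2" "0 \<le> Xb1" "0 \<le> Xb2" "0 \<le> Y1" "0 \<le> Y2"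
    unfolding X1_def X2_def Xb1_def Xb2_def Y1_def Y2_def by (simp_all add: GI_self_nonneg)
  have nm: "(norm_m1 L N u)^2 = h^2 * X" if "invlap L N u = \<psi>" "Sg N (\<lambda>i j. u i j * \<psi> i j) = X" "0 \<le> X" for u \<psi> X
  proof -
    have "inner_m1 L N u u = h^2 * X" using that by (simp add: inner_m1_def ginner_Sg h_def)
    then show ?thesis using that(3) by (simp add: norm_m1_def)
  qed
  have gn: "(gnorm2 L N u)^2 = h^2 * Sg N (\<lambda>i j. u i j * u i j)" for u
  proof -
    have "0 \<le> Sg N (\<lambda>i j. u i j * u i j)" by (rule Sg_nonneg) simp
    then show ?thesis by (simp add: gnorm2_def ginner_Sg h_def)
  qed
  have Fr: "Fh L N M0 N0 c12 c13 c23 e1 e2 e3 dt r1 r2 p1 p2 =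
      Gh L N M0 N0 c12 c13 c23 e1 e2 e3 r1 r2 + 3 / (4 * dt) * (h^2 * X1 + h^2 * X2) + c13 * (h^2 * Z1) + c23 * (h^2 * Z2)"
    unfolding Fh_def nm[OF \<psi>1_def[symmetric] X1a nX(1)] nm[OF \<psi>2_def[symmetric] X2a nX(2)] gn Z1_def Z2_def ..
  have Fp: "Fh L N M0 N0 c12 c13 c23 e1 e2 e3 dt p1 p2 q1 q2 =
      Gh L N M0 N0 c12 c13 c23 e1 e2 e3 p1 p2 + 3 / (4 * dt) * (h^2 * Xb1 + h^2 * Xb2) + c13 * (h^2 * Zb1) + c23 * (h^2 * Zb2)"
    unfolding Fh_def nm[OF \<phi>1_def[symmetric] Xb1a nX(3)] nm[OF \<phi>2_def[symmetric] Xb2a nX(4)] gn Zb1_def Zb2_def ..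
  let ?A1 = "2 * c13^2 + (c12 - c13 - c23)^2 / 2"
  let ?A2 = "2 * c23^2 + (c12 - c13 - c23)^2 / 2"
  define \<mu>1 where "\<mu>1 = (\<lambda>i j. dGc1 L N M0 N0 e1 e3 r1 r2 i j
      + dHa c12 c13 c23 (2 * p1 i j - q1 i j) (2 * p2 i j - q2 i j) - ?A1 * dt * lap h ?a1 i j)"
  define \<mu>2 where "\<mu>2 = (\<lambda>i j. dGc2 L N M0 N0 e2 e3 r1 r2 i j
      + dHb c12 c13 c23 (2 * p1 i j - q1 i j) (2 * p2 i j - q2 i j) - ?A2 * dt * lap h ?a2 i j)"
  have sch: "\<And>i j. (3 * r1 i j - 4 * p1 i j + q1 i j) / (2 * dt) = lap h \<mu>1 i j"
            "\<And>i j. (3 * r2 i j - 4 * p2 i j + q2 i j) / (2 * dt) = lap h \<mu>2 i j"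
    using assms(20) unfolding bdf2_step_def Let_def \<mu>1_def \<mu>2_def h_def by simp_all
  have pp\<mu>1: "pp N \<mu>1"
    using pp_dGc1[OF ppr1 ppr2, of L M0 N0 e1 e3] pp_lap[OF ppa1, of h] ppp1 ppp2 ppq1 ppq2
    unfolding pp_def \<mu>1_def by simp
  have pp\<mu>2: "pp N \<mu>2"
    using pp_dGc2[OF ppr1 ppr2, of L M0 N0 e2 e3] pp_lap[OF ppa2, of h] ppp1 ppp2 ppq1 ppq2
    unfolding pp_def \<mu>2_def by simp
  have mu1: "Sg N (\<lambda>i j. \<mu>1 i j * ?a1 i j) = - (3 * X1 - C1) / (2 * dt)"
  proof -
    have "Sg N (\<lambda>i j. \<mu>1 i j * ?a1 i j) = - Sg N (\<lambda>i j. \<mu>1 i j * lap h \<psi>1 i j)"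
      by (simp add: Sg_neg[symmetric] flip: s\<psi>1(2))
    also have "\<dots> = - Sg N (\<lambda>i j. lap h \<mu>1 i j * \<psi>1 i j)"
      using lap_selfadj[OF pp\<mu>1 s\<psi>1(1), of h] by simp
    also have "Sg N (\<lambda>i j. lap h \<mu>1 i j * \<psi>1 i j) = Sg N (\<lambda>i j. (3 * (?a1 i j * \<psi>1 i j) - ?b1 i j * \<psi>1 i j) / (2 * dt))"
    proof (rule Sg_cong)
      fix i j show "lap h \<mu>1 i j * \<psi>1 i j = (3 * (?a1 i j * \<psi>1 i j) - ?b1 i j * \<psi>1 i j) / (2 * dt)"
      proof -
        have e: "lap h \<mu>1 i j = (3 * ?a1 i j - ?b1 i j) / (2 * dt)"
          using sch(1)[of i j] by (simp add: algebra_simps)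
        show ?thesis unfolding e using dtp by (simp add: field_simps)
      qed
    qed
    also have "\<dots> = (3 * X1 - C1) / (2 * dt)" by (simp only: Sg_divide Sg_diff Sg_cmult X1a C1a)
    finally show ?thesis by (simp only: minus_divide_left)
  qed
  have mu2: "Sg N (\<lambda>i j. \<mu>2 i j * ?a2 i j) = - (3 * X2 - C2) / (2 * dt)"
  proof -
    have "Sg N (\<lambda>i j. \<mu>2 i j * ?a2 i j) = - Sg N (\<lambda>i j. \<mu>2 i j * lap h \<psi>2 i j)"
      by (simp add: Sg_neg[symmetric] flip: s\<psi>2(2))
    also have "\<dots> = - Sg N (\<lambda>i j. lap h \<mu>2 i j * \<psi>2 i j)"
      using lap_selfadj[OF pp\<mu>2 s\<psi>2(1), of h] by simp
    also have "Sg N (\<lambda>i j. lap h \<mu>2 i j * \<psi>2 i j) = Sg N (\<lambda>i j. (3 * (?a2 i j * \<psi>2 i j) - ?b2 i j * \<psi>2 i j) / (2 * dt))"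
    proof (rule Sg_cong)
      fix i j show "lap h \<mu>2 i j * \<psi>2 i j = (3 * (?a2 i j * \<psi>2 i j) - ?b2 i j * \<psi>2 i j) / (2 * dt)"
      proof -
        have e: "lap h \<mu>2 i j = (3 * ?a2 i j - ?b2 i j) / (2 * dt)"
          using sch(2)[of i j] by (simp add: algebra_simps)
        show ?thesis unfolding e using dtp by (simp add: field_simps)
      qed
    qed
    also have "\<dots> = (3 * X2 - C2) / (2 * dt)" by (simp only: Sg_divide Sg_diff Sg_cmult X2a C2a)
    finally show ?thesis by (simp only: minus_divide_left)
  qed
  let ?T1 = "Tk h r1" and ?T2 = "Tk h r2" and ?T3 = "Tk h (\<lambda>a b. 1 - r1 a b - r2 a b)"
  let ?dHa = "\<lambda>i j. dHa c12 c13 c23 (2 * p1 i j - q1 i j) (2 * p2 i j - q2 i j)"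
  let ?dHb = "\<lambda>i j. dHb c12 c13 c23 (2 * p1 i j - q1 i j) (2 * p2 i j - q2 i j)"
  have dec1: "Sg N (\<lambda>i j. \<mu>1 i j * ?a1 i j) =
     Sg N (\<lambda>i j. dSa M0 N0 (r1 i j) (r2 i j) * ?a1 i j) + e1^2 * Sg N (\<lambda>i j. ?T1 i j * ?a1 i j)
     - e3^2 * Sg N (\<lambda>i j. ?T3 i j * ?a1 i j) + Sg N (\<lambda>i j. ?dHa i j * ?a1 i j) + ?A1 * dt * Y1"
  proof -
    have "Sg N (\<lambda>i j. \<mu>1 i j * ?a1 i j) = Sg N (\<lambda>i j. dSa M0 N0 (r1 i j) (r2 i j) * ?a1 i j + e1^2 * (?T1 i j * ?a1 i j)
     - e3^2 * (?T3 i j * ?a1 i j) + ?dHa i j * ?a1 i j - (?A1 * dt) * (lap h ?a1 i j * ?a1 i j))"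
      by (rule Sg_cong) (simp add: \<mu>1_def dGc1_def h_def field_simps)
    also have "\<dots> = Sg N (\<lambda>i j. dSa M0 N0 (r1 i j) (r2 i j) * ?a1 i j) + e1^2 * Sg N (\<lambda>i j. ?T1 i j * ?a1 i j)
     - e3^2 * Sg N (\<lambda>i j. ?T3 i j * ?a1 i j) + Sg N (\<lambda>i j. ?dHa i j * ?a1 i j) - (?A1 * dt) * Sg N (\<lambda>i j. lap h ?a1 i j * ?a1 i j)"
      by (simp only: Sg_add Sg_diff Sg_cmult)
    also have "Sg N (\<lambda>i j. lap h ?a1 i j * ?a1 i j) = - Y1" unfolding Y1_def by (rule sbp_lap[OF ppa1 ppa1])
    finally show ?thesis by simp
  qed
  have dec2: "Sg N (\<lambda>i j. \<mu>2 i j * ?a2 i j) =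
     Sg N (\<lambda>i j. dSb M0 N0 (r1 i j) (r2 i j) * ?a2 i j) + e2^2 * Sg N (\<lambda>i j. ?T2 i j * ?a2 i j)
     - e3^2 * Sg N (\<lambda>i j. ?T3 i j * ?a2 i j) + Sg N (\<lambda>i j. ?dHb i j * ?a2 i j) + ?A2 * dt * Y2"
  proof -
    have "Sg N (\<lambda>i j. \<mu>2 i j * ?a2 i j) = Sg N (\<lambda>i j. dSb M0 N0 (r1 i j) (r2 i j) * ?a2 i j + e2^2 * (?T2 i j * ?a2 i j)
     - e3^2 * (?T3 i j * ?a2 i j) + ?dHb i j * ?a2 i j - (?A2 * dt) * (lap h ?a2 i j * ?a2 i j))"
      by (rule Sg_cong) (simp add: \<mu>2_def dGc2_def h_def field_simps)
    also have "\<dots> = Sg N (\<lambda>i j. dSb M0 N0 (r1 i j) (r2 i j) * ?a2 i j) + e2^2 * Sg N (\<lambda>i j. ?T2 i j * ?a2 i j)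
     - e3^2 * Sg N (\<lambda>i j. ?T3 i j * ?a2 i j) + Sg N (\<lambda>i j. ?dHb i j * ?a2 i j) - (?A2 * dt) * Sg N (\<lambda>i j. lap h ?a2 i j * ?a2 i j)"
      by (simp only: Sg_add Sg_diff Sg_cmult)
    also have "Sg N (\<lambda>i j. lap h ?a2 i j * ?a2 i j) = - Y2" unfolding Y2_def by (rule sbp_lap[OF ppa2 ppa2])
    finally show ?thesis by simp
  qed
  let ?u3r = "\<lambda>a b. 1 - r1 a b - r2 a b" and ?u3p = "\<lambda>a b. 1 - p1 a b - p2 a b"
  have pu3r: "pp N ?u3r" using ppr1 ppr2 unfolding pp_def by simp
  have pu3p: "pp N ?u3p" using ppp1 ppp2 unfolding pp_def by simp
  have u3rpos: "\<And>i j. 0 < ?u3r i j" using gr(5) by (simp add: algebra_simps)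
  have u3ppos: "\<And>i j. 0 < ?u3p i j" using gp(5) by (simp add: algebra_simps)
  define ST1 where "ST1 = Sg N (\<lambda>i j. ?T1 i j * ?a1 i j)"
  define ST2 where "ST2 = Sg N (\<lambda>i j. ?T2 i j * ?a2 i j)"
  define ST3a where "ST3a = Sg N (\<lambda>i j. ?T3 i j * ?a1 i j)"
  define ST3b where "ST3b = Sg N (\<lambda>i j. ?T3 i j * ?a2 i j)"
  define SSa where "SSa = Sg N (\<lambda>i j. dSa M0 N0 (r1 i j) (r2 i j) * ?a1 i j)"
  define SSb where "SSb = Sg N (\<lambda>i j. dSb M0 N0 (r1 i j) (r2 i j) * ?a2 i j)"
  define SSd where "SSd = Sg N (\<lambda>i j. Sfun M0 N0 (r1 i j) (r2 i j) - Sfun M0 N0 (p1 i j) (p2 i j))"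
  define SHd where "SHd = Sg N (\<lambda>i j. Hfun c12 c13 c23 (r1 i j) (r2 i j) - Hfun c12 c13 c23 (p1 i j) (p2 i j))"
  define SHa where "SHa = Sg N (\<lambda>i j. ?dHa i j * ?a1 i j)"
  define SHb where "SHb = Sg N (\<lambda>i j. ?dHb i j * ?a2 i j)"
  define SW where "SW = Sg N (\<lambda>i j. Wf c12 c13 c23 (?a1 i j) (?a2 i j) (?b1 i j) (?b2 i j))"
  have gE1: "gradE L N r1 - gradE L N p1 \<le> h^2 * ST1"
    using gradE_conv[OF ppr1 ppp1 gr(3) gp(3), of L] by (simp add: ginner_Sg h_def ST1_def)
  have gE2: "gradE L N r2 - gradE L N p2 \<le> h^2 * ST2"
    using gradE_conv[OF ppr2 ppp2 gr(4) gp(4), of L] by (simp add: ginner_Sg h_def ST2_def)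
  have gE3: "gradE L N ?u3r - gradE L N ?u3p \<le> h^2 * (- ST3a - ST3b)"
  proof -
    have "Sg N (\<lambda>i j. ?T3 i j * (?u3r i j - ?u3p i j)) = Sg N (\<lambda>i j. - (?T3 i j * ?a1 i j) - ?T3 i j * ?a2 i j)"
      by (rule Sg_cong) (simp add: algebra_simps)
    also have "\<dots> = - ST3a - ST3b" unfolding ST3a_def ST3b_def by (simp only: Sg_diff Sg_neg)
    finally have e: "Sg N (\<lambda>i j. ?T3 i j * (?u3r i j - ?u3p i j)) = - ST3a - ST3b" .
    show ?thesis using gradE_conv[OF pu3r pu3p u3rpos u3ppos, of L] e by (simp add: ginner_Sg h_def)
  qed
  have Gdiff: "Gh L N M0 N0 c12 c13 c23 e1 e2 e3 r1 r2 - Gh L N M0 N0 c12 c13 c23 e1 e2 e3 p1 p2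
     = h^2 * SSd + h^2 * SHd + e1^2 * (gradE L N r1 - gradE L N p1) + e2^2 * (gradE L N r2 - gradE L N p2)
       + e3^2 * (gradE L N ?u3r - gradE L N ?u3p)"
  proof -
    have "Sg N (\<lambda>i j. (Sfun M0 N0 (r1 i j) (r2 i j) + Hfun c12 c13 c23 (r1 i j) (r2 i j)) * 1)
        - Sg N (\<lambda>i j. (Sfun M0 N0 (p1 i j) (p2 i j) + Hfun c12 c13 c23 (p1 i j) (p2 i j)) * 1) = SSd + SHd"
      unfolding SSd_def SHd_def by (simp add: Sg_diff[symmetric] Sg_add[symmetric] algebra_simps)
    then show ?thesis unfolding Gh_def ginner_Sg h_def[symmetric] by (simp add: algebra_simps)
  qed
  have SS: "SSd \<le> SSa + SSb"
  proof -
    have "SSd \<le> Sg N (\<lambda>i j. dSa M0 N0 (r1 i j) (r2 i j) * ?a1 i j + dSb M0 N0 (r1 i j) (r2 i j) * ?a2 i j)"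
      unfolding SSd_def
      by (rule Sg_mono, rule Sconv) (use assms(4,5) gr gp in auto)
    then show ?thesis unfolding SSa_def SSb_def by (simp only: Sg_add)
  qed
  have SH: "SHd = SHa + SHb + SW + c13 * Zb1 + c23 * Zb2 - c13 * Z1 - c23 * Z2"
  proof -
    have "SHd = Sg N (\<lambda>i j. ?dHa i j * ?a1 i j + ?dHb i j * ?a2 i j + Wf c12 c13 c23 (?a1 i j) (?a2 i j) (?b1 i j) (?b2 i j)
       + c13 * (?b1 i j * ?b1 i j) + c23 * (?b2 i j * ?b2 i j) - c13 * (?a1 i j * ?a1 i j) - c23 * (?a2 i j * ?a2 i j))"
      unfolding SHd_def
    proof (rule Sg_cong)
      fix i j
      show "Hfun c12 c13 c23 (r1 i j) (r2 i j) - Hfun c12 c13 c23 (p1 i j) (p2 i j) = ?dHa i j * ?a1 i j + ?dHb i j * ?a2 i j + Wf c12 c13 c23 (?a1 i j) (?a2 i j) (?b1 i j) (?b2 i j)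
       + c13 * (?b1 i j * ?b1 i j) + c23 * (?b2 i j * ?b2 i j) - c13 * (?a1 i j * ?a1 i j) - c23 * (?a2 i j * ?a2 i j)"
        using H_ident[of c12 c13 c23 "r1 i j" "r2 i j" "p1 i j" "p2 i j" "q1 i j" "q2 i j"]
        by (simp only: power2_eq_square)
    qed
    then show ?thesis unfolding SHa_def SHb_def SW_def Z1_def Z2_def Zb1_def Zb2_def by (simp only: Sg_add Sg_diff Sg_cmult)
  qed
  define \<beta>1 where "\<beta>1 = 2 * c13 + \<bar>c12 - c13 - c23\<bar> / 2"
  define \<beta>2 where "\<beta>2 = 2 * c23 + \<bar>c12 - c13 - c23\<bar> / 2"
  have b1p: "0 \<le> \<beta>1" and b2p: "0 \<le> \<beta>2" using assms(10,11) by (simp_all add: \<beta>1_def \<beta>2_def)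
  have SWb: "SW \<le> \<beta>1 * Z1 + \<beta>2 * Z2"
  proof -
    have "SW \<le> Sg N (\<lambda>i j. \<beta>1 * (?a1 i j * ?a1 i j) + \<beta>2 * (?a2 i j * ?a2 i j))"
      unfolding SW_def
    proof (rule Sg_mono)
      fix i j show "Wf c12 c13 c23 (?a1 i j) (?a2 i j) (?b1 i j) (?b2 i j) \<le> \<beta>1 * (?a1 i j * ?a1 i j) + \<beta>2 * (?a2 i j * ?a2 i j)"
        using W_bound[OF assms(10,11,12), of "?a1 i j" "?a2 i j" "?b1 i j" "?b2 i j"]
        by (simp only: \<beta>1_def \<beta>2_def power2_eq_square)
    qed
    then show ?thesis unfolding Z1_def Z2_def by (simp only: Sg_add Sg_cmult)
  qed
  have am1: "C1 \<le> 3 / 2 * Xb1 + 1 / 6 * X1" unfolding C1_def Xb1_def X1_def by (rule GI_am2)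
  have am2: "C2 \<le> 3 / 2 * Xb2 + 1 / 6 * X2" unfolding C2_def Xb2_def X2_def by (rule GI_am2)
  have P21: "\<beta>1 * Z1 \<le> 2 / 3 * (X1 / dt) + ?A1 * dt * Y1"
  proof (rule P2[OF dtp nX(5) b1p])
    show "2 * (3 * \<beta>1 / 4 * dt) * Z1 \<le> X1 + (3 * \<beta>1 / 4 * dt)^2 * Y1"
      unfolding Z1a X1_def Y1_def by (rule GI_am1)
    show "3 / 8 * \<beta>1^2 \<le> ?A1" unfolding \<beta>1_def by (rule A_bound)
  qed
  have P22: "\<beta>2 * Z2 \<le> 2 / 3 * (X2 / dt) + ?A2 * dt * Y2"
  proof (rule P2[OF dtp nX(6) b2p])
    show "2 * (3 * \<beta>2 / 4 * dt) * Z2 \<le> X2 + (3 * \<beta>2 / 4 * dt)^2 * Y2"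
      unfolding Z2a X2_def Y2_def by (rule GI_am1)
    show "3 / 8 * \<beta>2^2 \<le> ?A2" unfolding \<beta>2_def by (rule A_bound)
  qed
  define Q where "Q = SSa + SSb + SHd + e1^2 * ST1 + e2^2 * ST2 - e3^2 * ST3a - e3^2 * ST3b
     + 3 / (4 * dt) * (X1 + X2 - Xb1 - Xb2) + c13 * (Z1 - Zb1) + c23 * (Z2 - Zb2)"
  have m1: "e1^2 * (gradE L N r1 - gradE L N p1) \<le> e1^2 * (h^2 * ST1)" using gE1 by (intro mult_left_mono) auto
  have m2: "e2^2 * (gradE L N r2 - gradE L N p2) \<le> e2^2 * (h^2 * ST2)" using gE2 by (intro mult_left_mono) auto
  have m3: "e3^2 * (gradE L N ?u3r - gradE L N ?u3p) \<le> e3^2 * (h^2 * (- ST3a - ST3b))" using gE3 by (intro mult_left_mono) auto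
  have m4: "h^2 * SSd \<le> h^2 * (SSa + SSb)" using SS by (intro mult_left_mono) auto
  have G: "Gh L N M0 N0 c12 c13 c23 e1 e2 e3 r1 r2 - Gh L N M0 N0 c12 c13 c23 e1 e2 e3 p1 p2
     \<le> h^2 * (SSa + SSb) + h^2 * SHd + e1^2 * (h^2 * ST1) + e2^2 * (h^2 * ST2) + e3^2 * (h^2 * (- ST3a - ST3b))"
    using Gdiff m1 m2 m3 m4 by linarith
  have e6: "h^2 * (SSa + SSb) + h^2 * SHd + e1^2 * (h^2 * ST1) + e2^2 * (h^2 * ST2) + e3^2 * (h^2 * (- ST3a - ST3b))
     + h^2 * (3 / (4 * dt) * (X1 + X2 - Xb1 - Xb2) + c13 * (Z1 - Zb1) + c23 * (Z2 - Zb2)) = h^2 * Q"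
    unfolding Q_def by (simp add: algebra_simps)
  have e7: "Fh L N M0 N0 c12 c13 c23 e1 e2 e3 dt r1 r2 p1 p2 - Fh L N M0 N0 c12 c13 c23 e1 e2 e3 dt p1 p2 q1 q2
     = (Gh L N M0 N0 c12 c13 c23 e1 e2 e3 r1 r2 - Gh L N M0 N0 c12 c13 c23 e1 e2 e3 p1 p2)
       + h^2 * (3 / (4 * dt) * (X1 + X2 - Xb1 - Xb2) + c13 * (Z1 - Zb1) + c23 * (Z2 - Zb2))"
    unfolding Fr Fp using dtp by (simp add: field_simps)
  have d1: "- (3 * X1 - C1) / (2 * dt) = - 3 / 2 * (X1 / dt) + 1 / 2 * (C1 / dt)" using dtp by (simp add: field_simps)
  have d2: "- (3 * X2 - C2) / (2 * dt) = - 3 / 2 * (X2 / dt) + 1 / 2 * (C2 / dt)" using dtp by (simp add: field_simps)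
  have d3: "3 / (4 * dt) * (X1 + X2 - Xb1 - Xb2) = 3 / 4 * (X1 / dt) + 3 / 4 * (X2 / dt) - 3 / 4 * (Xb1 / dt) - 3 / 4 * (Xb2 / dt)"
    using dtp by (simp add: field_simps)
  have d4: "C1 / dt \<le> 3 / 2 * (Xb1 / dt) + 1 / 6 * (X1 / dt)"
  proof -
    have "C1 / dt \<le> (3 / 2 * Xb1 + 1 / 6 * X1) / dt" using am1 dtp by (intro divide_right_mono) auto
    then show ?thesis by (simp add: add_divide_distrib)
  qed
  have d5: "C2 / dt \<le> 3 / 2 * (Xb2 / dt) + 1 / 6 * (X2 / dt)"
  proof -
    have "C2 / dt \<le> (3 / 2 * Xb2 + 1 / 6 * X2) / dt" using am2 dtp by (intro divide_right_mono) auto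
    then show ?thesis by (simp add: add_divide_distrib)
  qed
  have d6: "c13 * (Z1 - Zb1) = c13 * Z1 - c13 * Zb1" "c23 * (Z2 - Zb2) = c23 * Z2 - c23 * Zb2"
    by (simp_all add: right_diff_distrib)
  have Q0: "Q \<le> 0"
    using mu1 mu2 dec1 dec2 SH SWb P21 P22 d1 d2 d3 d4 d5 d6
    unfolding Q_def ST1_def[symmetric] ST2_def[symmetric] ST3a_def[symmetric] ST3b_def[symmetric]
      SSa_def[symmetric] SSb_def[symmetric] SHa_def[symmetric] SHb_def[symmetric]
    by linarith
  have "h^2 * Q \<le> 0" using Q0 by (simp add: mult_nonneg_nonpos)
  then show ?thesis using G e6 e7 by linarith
qed


end
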